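(* Let $k\ge 3$ and let $\pi=\pi(1)\cdots\pi(k)$ be a permutation of $[k]$ with $\pi(k)=\pi(k-1)+1=\pi(k-2)+2$. Let $\widetilde\pi=\pi(1)\cdots\pi(k-2)\pi(k)\pi(k-1)$ be the pattern obtained by swapping the last two entries. Then $\{213,\pi\}$ and $\{213,\widetilde\pi\}$ are forest-Wilf equivalent: for every $n\ge 0$, the number of rooted labeled forests on $[n]$ avoiding both $213$ and $\pi$ equals the number of rooted labeled forests on $[n]$ avoiding both $213$ and $\widetilde\pi$.
   Context: A rooted labeled forest on $[n]$ is an unordered (non-planar) forest on $n$ vertices, each component having a distinguished root, whose vertices carry distinct labels from $[n]$; $u$ is an ancestor of $v$ if $u$ lies on the path from the root of $v$'s component to $v$. A pattern is a permutation $\pi$ of $[k]$. An instance of $\pi$ in a forest is a sequence of vertices $v_1,\dots,v_k$ with $v_i$ a strict ancestor of $v_{i+1}$ for all $i$ and whose labels are in the same relative order as $\pi(1),\dots,\pi(k)$. A forest avoids a set of patterns if it contains no instance of any of them. *)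

theory Defs
  imports Main
begin

text \<open>A rooted labeled forest on [n] = {1..n} is encoded by its parent function
  f :: nat => nat: f v is the parent of vertex v, with f v = 0 meaning that v is a
  root. Outside {1..n} the function is 0 (canonical encoding). Acyclicity: following
  parents from any vertex eventually reaches 0. This is a bijection with rooted
  labeled forests on [n].\<close>

definition forest :: "nat \<Rightarrow> (nat \<Rightarrow> nat) \<Rightarrow> bool" where
  "forest n f \<longleftrightarrow>
     (\<forall>v. v \<notin> {1..n} \<longrightarrow> f v = 0) \<and>
     (\<forall>v \<in> {1..n}. f v \<le> n) \<and>
     (\<forall>v \<in> {1..n}. \<exists>j. (f ^^ j) v = 0)"

definition strict_anc :: "(nat \<Rightarrow> nat) \<Rightarrow> nat \<Rightarrow> nat \<Rightarrow> bool" where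
  "strict_anc f u v \<longleftrightarrow> u \<noteq> 0 \<and> (\<exists>j\<ge>1. (f ^^ j) v = u)"

definition is_perm :: "nat list \<Rightarrow> bool" where
  "is_perm p \<longleftrightarrow> distinct p \<and> set p = {1..length p}"

definition contains :: "nat \<Rightarrow> (nat \<Rightarrow> nat) \<Rightarrow> nat list \<Rightarrow> bool" where
  "contains n f p \<longleftrightarrow> (\<exists>vs. length vs = length p \<and> set vs \<subseteq> {1..n} \<and>
      (\<forall>i. Suc i < length vs \<longrightarrow> strict_anc f (vs ! i) (vs ! Suc i)) \<and>
      (\<forall>i < length p. \<forall>j < length p. vs ! i < vs ! j \<longleftrightarrow> p ! i < p ! j))"

definition avoids :: "nat \<Rightarrow> (nat \<Rightarrow> nat) \<Rightarrow> nat list set \<Rightarrow> bool" where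
  "avoids n f P \<longleftrightarrow> (\<forall>p \<in> P. \<not> contains n f p)"

definition num_avoiders :: "nat \<Rightarrow> nat list set \<Rightarrow> nat" where
  "num_avoiders n P = card {f. forest n f \<and> avoids n f P}"

end

theory Submission
  imports Defs
begin
lemma fpow_zero: fixes f :: "nat \<Rightarrow> nat" assumes "f 0 = 0" shows "(f ^^ j) 0 = 0"
proof (induction j)
  case 0 show ?case by simp
next
  case (Suc j) then show ?case using assms by simp
qed

lemma fpow_split: fixes f :: "nat \<Rightarrow> nat" assumes "i \<le> j"
  shows "(f ^^ j) v = (f ^^ (j - i)) ((f ^^ i) v)"
proof -
  have "(f ^^ ((j - i) + i)) v = (f ^^ (j - i)) ((f ^^ i) v)" by (simp add: funpow_add)
  then show ?thesis using assms by simp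
qed

lemma forest_f0: "forest n f \<Longrightarrow> f 0 = 0"
  unfolding forest_def by auto

lemma forest_le: assumes "forest n f" "v \<le> n" shows "(f ^^ j) v \<le> n"
  using assms(2)
proof (induction j)
  case 0 then show ?case by simp
next
  case (Suc j)
  have "(f ^^ Suc j) v = f ((f ^^ j) v)" by simp
  moreover have "(f ^^ j) v \<le> n" using Suc by simp
  ultimately show ?case using assms(1) unfolding forest_def
    by (cases "(f ^^ j) v = 0") auto
qed

lemma anc_in:
  assumes "forest n f" "strict_anc f u v"
  shows "u \<in> {1..n}" "v \<in> {1..n}"
proof -
  obtain j where j: "j \<ge> 1" "(f ^^ j) v = u" "u \<noteq> 0" using assms(2) unfolding strict_anc_def by auto
  have f0: "f 0 = 0" using forest_f0[OF assms(1)] .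
  show "v \<in> {1..n}"
  proof (rule ccontr)
    assume "v \<notin> {1..n}"
    then have "f v = 0" using assms(1) unfolding forest_def by auto
    have "(f ^^ j) v = (f ^^ (j - 1)) ((f ^^ 1) v)" using fpow_split[of 1 j f v] j(1) by simp
    also have "\<dots> = 0" using \<open>f v = 0\<close> fpow_zero[of f, OF f0] by simp
    finally show False using j by simp
  qed
  then have "u \<le> n" using forest_le[OF assms(1)] j by (metis atLeastAtMost_iff)
  then show "u \<in> {1..n}" using j(3) by simp
qed

lemma anc_trans:
  assumes "strict_anc f u v" "strict_anc f v w" shows "strict_anc f u w"
proof -
  obtain i where i: "i \<ge> 1" "(f ^^ i) v = u" "u \<noteq> 0" using assms(1) unfolding strict_anc_def by auto
  obtain j where j: "j \<ge> 1" "(f ^^ j) w = v" using assms(2) unfolding strict_anc_def by auto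
  have "(f ^^ (i + j)) w = u" using i j by (simp add: funpow_add)
  then show ?thesis unfolding strict_anc_def using i j by (intro conjI exI[of _ "i+j"]) auto
qed

lemma fpow_mult_cycle: assumes "(f ^^ j) v = v" shows "(f ^^ (j * m)) v = v"
proof (induction m)
  case 0 then show ?case by simp
next
  case (Suc m)
  have "(f ^^ (j * Suc m)) v = (f ^^ j) ((f ^^ (j * m)) v)"
    by (simp add: funpow_add mult.commute)
  then show ?case using Suc assms by simp
qed

lemma anc_irrefl:
  assumes "forest n f" shows "\<not> strict_anc f v v"
proof
  assume a: "strict_anc f v v"
  then have vin: "v \<in> {1..n}" using anc_in[OF assms] by auto
  obtain j where j: "j \<ge> 1" "(f ^^ j) v = v" using a unfolding strict_anc_def by auto
  have "\<forall>v \<in> {1..n}. \<exists>j. (f ^^ j) v = 0" using assms unfolding forest_def by (elim conjE)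
  then have "\<exists>m. (f ^^ m) v = 0" using vin by (rule bspec)
  then obtain m where m: "(f ^^ m) v = 0" by blast
  have "(f ^^ (j * m)) v = v" using fpow_mult_cycle[OF j(2)] .
  moreover have "j * m \<ge> m" using j(1) by simp
  then have "(f ^^ (j * m)) v = (f ^^ (j * m - m)) ((f ^^ m) v)" by (rule fpow_split)
  then have "(f ^^ (j * m)) v = 0" using m fpow_zero[of f, OF forest_f0[OF assms]] by simp
  ultimately show False using vin by simp
qed

lemma anc_asym:
  assumes "forest n f" "strict_anc f u v" shows "\<not> strict_anc f v u"
  using anc_irrefl[OF assms(1)] anc_trans assms(2) by blast

lemma anc_neq:
  assumes "forest n f" "strict_anc f u v" shows "u \<noteq> v"
  using anc_irrefl[OF assms(1)] assms(2) by blast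

lemma anc_linear:
  assumes "strict_anc f u w" "strict_anc f v w"
  shows "u = v \<or> strict_anc f u v \<or> strict_anc f v u"
proof -
  obtain i where i: "i \<ge> 1" "(f ^^ i) w = u" "u \<noteq> 0" using assms(1) unfolding strict_anc_def by auto
  obtain j where j: "j \<ge> 1" "(f ^^ j) w = v" "v \<noteq> 0" using assms(2) unfolding strict_anc_def by auto
  consider "i = j" | "i < j" | "j < i" by arith
  then show ?thesis
  proof cases
    case 1 then show ?thesis using i j by simp
  next
    case 2
    have "(f ^^ (j - i)) u = v" using i j 2 fpow_split[of i j f w] by simp
    then have "strict_anc f v u" unfolding strict_anc_def using 2 j(3) by (intro conjI exI[of _ "j-i"]) auto
    then show ?thesis by simp
  next
    case 3
    have "(f ^^ (i - j)) v = u" using i j 3 fpow_split[of j i f w] by simp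
    then have "strict_anc f u v" unfolding strict_anc_def using 3 i(3) by (intro conjI exI[of _ "i-j"]) auto
    then show ?thesis by simp
  qed
qed

definition depth :: "(nat \<Rightarrow> nat) \<Rightarrow> nat \<Rightarrow> nat" where
  "depth f v = card {u. strict_anc f u v}"

lemma depth_less:
  assumes "forest n f" "strict_anc f y w" shows "depth f y < depth f w"
proof -
  have fin: "finite {u. strict_anc f u w}"
    by (rule finite_subset[of _ "{1..n}"]) (use anc_in[OF assms(1)] in auto)
  have "{u. strict_anc f u y} \<subset> {u. strict_anc f u w}"
    using anc_trans[OF _ assms(2)] assms(2) anc_irrefl[OF assms(1), of y] by auto
  then show ?thesis unfolding depth_def using fin psubset_card_mono by blast
qed

definition inst :: "nat \<Rightarrow> (nat \<Rightarrow> nat) \<Rightarrow> (nat \<Rightarrow> nat) \<Rightarrow> nat list \<Rightarrow> (nat \<Rightarrow> nat) \<Rightarrow> bool" where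
  "inst n f lam p g \<longleftrightarrow> (\<forall>i<length p. g i \<in> {1..n}) \<and>
     (\<forall>i j. i < j \<longrightarrow> j < length p \<longrightarrow> strict_anc f (g i) (g j)) \<and>
     (\<forall>i<length p. \<forall>j<length p. lam (g i) < lam (g j) \<longleftrightarrow> p ! i < p ! j)"

lemma chain_trans:
  assumes "\<And>i. Suc i < L \<Longrightarrow> strict_anc f (g i) (g (Suc i))" "i < j" "j < L"
  shows "strict_anc f (g i) (g j)"
  using assms(2,3)
proof (induction j)
  case 0 then show ?case by simp
next
  case (Suc j)
  show ?case
  proof (cases "i = j")
    case True then show ?thesis using assms(1) Suc by simp
  next
    case False
    then have "strict_anc f (g i) (g j)" using Suc by simp
    then show ?thesis using anc_trans assms(1) Suc by blast
  qed
qed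

lemma contains_inst: "contains n f p \<longleftrightarrow> (\<exists>g. inst n f id p g)"
proof
  assume "contains n f p"
  then obtain vs where vs: "length vs = length p" "set vs \<subseteq> {1..n}"
    "\<forall>i. Suc i < length vs \<longrightarrow> strict_anc f (vs ! i) (vs ! Suc i)"
    "\<forall>i < length p. \<forall>j < length p. vs ! i < vs ! j \<longleftrightarrow> p ! i < p ! j"
    unfolding contains_def by blast
  have r: "\<forall>i<length p. vs ! i \<in> {1..n}" using vs(1,2) nth_mem by (metis subsetD)
  have "inst n f id p ((!) vs)"
    unfolding inst_def using r vs chain_trans[of "length vs" f "(!) vs"] by auto
  then show "\<exists>g. inst n f id p g" by blast
next
  assume "\<exists>g. inst n f id p g"
  then obtain g where g: "inst n f id p g" by blast
  let ?vs = "map g [0..<length p]"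
  show "contains n f p" unfolding contains_def
    apply (rule exI[of _ ?vs])
    using g unfolding inst_def by auto
qed

definition av213 :: "(nat \<Rightarrow> nat) \<Rightarrow> (nat \<Rightarrow> nat) \<Rightarrow> bool" where
  "av213 f lam \<longleftrightarrow> (\<forall>u v w. strict_anc f u v \<longrightarrow> strict_anc f v w \<longrightarrow> \<not> (lam v < lam u \<and> lam u < lam w))"

lemma less3: "(i::nat) < 3 \<longleftrightarrow> i = 0 \<or> i = 1 \<or> i = 2" by auto

lemma contains213: assumes F: "forest n f" shows "contains n f [2,1,3] \<longleftrightarrow> \<not> av213 f id"
proof
  assume "contains n f [2,1,3]"
  then obtain g where g: "inst n f id [2,1,3] g" using contains_inst by blast
  then have "strict_anc f (g 0) (g 1)" "strict_anc f (g 1) (g 2)" "g 1 < g 0" "g 0 < g 2"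
    unfolding inst_def by auto
  then show "\<not> av213 f id" unfolding av213_def by auto
next
  assume "\<not> av213 f id"
  then obtain u v w where a: "strict_anc f u v" "strict_anc f v w" "v < u" "u < w"
    unfolding av213_def by auto
  have "inst n f id [2,1,3] (\<lambda>i. [u,v,w] ! i)"
    unfolding inst_def using a anc_in[OF F a(1)] anc_in[OF F a(2)] anc_trans[OF a(1,2)]
    by (auto simp: less_Suc_eq)
  then show "contains n f [2,1,3]" using contains_inst by blast
qed

definition Xs :: "nat \<Rightarrow> (nat \<Rightarrow> nat) \<Rightarrow> (nat \<Rightarrow> nat) \<Rightarrow> nat list \<Rightarrow> nat set" where
  "Xs n f lam r = {x. \<exists>g. inst n f lam r g \<and> g (length r - 1) = x}"

definition Big :: "(nat \<Rightarrow> nat) \<Rightarrow> (nat \<Rightarrow> nat) \<Rightarrow> nat \<Rightarrow> nat set" where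
  "Big f lam x = {v. strict_anc f x v \<and> lam x < lam v}"

definition Us :: "nat \<Rightarrow> (nat \<Rightarrow> nat) \<Rightarrow> (nat \<Rightarrow> nat) \<Rightarrow> nat list \<Rightarrow> nat set" where
  "Us n f lam r = {v. \<exists>y\<in>Xs n f lam r. v \<in> Big f lam y}"

definition Tops :: "nat \<Rightarrow> (nat \<Rightarrow> nat) \<Rightarrow> (nat \<Rightarrow> nat) \<Rightarrow> nat list \<Rightarrow> nat set" where
  "Tops n f lam r = Xs n f lam r - Us n f lam r"

locale L213 =
  fixes n :: nat and f :: "nat \<Rightarrow> nat" and lam :: "nat \<Rightarrow> nat" and r :: "nat list"
  assumes F: "forest n f" and I: "inj_on lam {1..n}" and A: "av213 f lam" and R: "r \<noteq> []"
begin

abbreviation "anc \<equiv> strict_anc f"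
abbreviation "L \<equiv> length r"
abbreviation "X \<equiv> Xs n f lam r"
abbreviation "U \<equiv> Us n f lam r"
abbreviation "T \<equiv> Tops n f lam r"
abbreviation "B \<equiv> Big f lam"
abbreviation "ins \<equiv> inst n f lam r"

lemma lneq: "anc u v \<Longrightarrow> lam u \<noteq> lam v"
  using anc_in[OF F] anc_neq[OF F] I by (metis inj_on_contraD)

lemma lneq2: "u \<in> {1..n} \<Longrightarrow> v \<in> {1..n} \<Longrightarrow> u \<noteq> v \<Longrightarrow> lam u \<noteq> lam v"
  using I by (metis inj_on_contraD)

lemma l213: "anc u v \<Longrightarrow> anc v w \<Longrightarrow> lam v < lam u \<Longrightarrow> lam w < lam u"
  using A lneq[of u w] anc_trans[of f u v w] unfolding av213_def by (metis nat_neq_iff)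

lemma lB: "anc x z \<Longrightarrow> anc z v \<Longrightarrow> lam x < lam v \<Longrightarrow> lam x < lam z"
  using A lneq[of x z] unfolding av213_def by (metis nat_neq_iff)

lemma inst_in: "ins g \<Longrightarrow> i < L \<Longrightarrow> g i \<in> {1..n}"
  unfolding inst_def by blast

lemma inst_anc: "ins g \<Longrightarrow> i < j \<Longrightarrow> j < L \<Longrightarrow> anc (g i) (g j)"
  unfolding inst_def by blast

lemma iso: "ins g \<Longrightarrow> i < L \<Longrightarrow> j < L \<Longrightarrow> lam (g i) < lam (g j) \<longleftrightarrow> r ! i < r ! j"
  unfolding inst_def by blast

lemma rho_neq: assumes "ins g" "i < L" "j < L" "i \<noteq> j" shows "r ! i \<noteq> r ! j"
proof
  assume e: "r ! i = r ! j"
  have "anc (g i) (g j) \<or> anc (g j) (g i)" using assms inst_anc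
    by (metis nat_neq_iff)
  then have "lam (g i) \<noteq> lam (g j)" using lneq by metis
  then show False using iso[OF assms(1,2,3)] iso[OF assms(1,3,2)] e by (metis nat_neq_iff)
qed

lemma rho213: assumes "ins g" "p < q" "q < s" "s < L" shows "\<not> (r ! q < r ! p \<and> r ! p < r ! s)"
proof
  assume a: "r ! q < r ! p \<and> r ! p < r ! s"
  have "lam (g q) < lam (g p)" "lam (g p) < lam (g s)" using a iso[OF assms(1)] assms by auto
  moreover have "anc (g p) (g q)" "anc (g q) (g s)" using inst_anc[OF assms(1)] assms by auto
  ultimately show False using A unfolding av213_def by blast
qed

lemma R1: assumes "ins g" "p < q" "q < L" "r ! p < r ! (L - 1)" shows "r ! p < r ! q"
proof (cases "q = L - 1")
  case True then show ?thesis using assms by simp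
next
  case False
  then have "\<not> (r ! q < r ! p \<and> r ! p < r ! (L - 1))" using rho213[OF assms(1,2), of "L - 1"] assms by auto
  then show ?thesis using assms rho_neq[OF assms(1), of p q] by auto
qed

lemma Big_anc: "v \<in> B x \<Longrightarrow> anc x v" unfolding Big_def by auto
lemma Big_lam: "v \<in> B x \<Longrightarrow> lam x < lam v" unfolding Big_def by auto

lemma XsI: "ins g \<Longrightarrow> g (L - 1) = x \<Longrightarrow> x \<in> X" unfolding Xs_def by auto
lemma XsE: "x \<in> X \<Longrightarrow> (\<And>g. ins g \<Longrightarrow> g (L - 1) = x \<Longrightarrow> P) \<Longrightarrow> P" unfolding Xs_def by auto

lemma repl_last:
  assumes g: "ins g" and v: "v \<in> B (g (L - 1))"
  shows "ins (g(L - 1 := v))"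
proof -
  let ?x = "g (L - 1)"
  have L0: "L \<ge> 1" using R by (cases r) auto
  have vin: "v \<in> {1..n}" using anc_in[OF F Big_anc[OF v]] by simp
  have ch: "anc ((g(L - 1 := v)) i) ((g(L - 1 := v)) j)" if "i < j" "j < L" for i j
  proof (cases "j = L - 1")
    case True
    then have "anc (g i) ?x" using inst_anc[OF g] that by auto
    then show ?thesis using True that anc_trans Big_anc[OF v] by auto
  next
    case False then show ?thesis using inst_anc[OF g] that by auto
  qed
  have cmp: "lam (g i) < lam v \<longleftrightarrow> lam (g i) < lam ?x" "lam v < lam (g i) \<longleftrightarrow> lam ?x < lam (g i)"
    if "i < L - 1" for i
  proof -
    have a: "anc (g i) ?x" using inst_anc[OF g, of i "L - 1"] that L0 by auto
    have lv: "lam ?x < lam v" using Big_lam[OF v] .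
    show "lam (g i) < lam v \<longleftrightarrow> lam (g i) < lam ?x"
    proof
      assume "lam (g i) < lam v"
      show "lam (g i) < lam ?x"
      proof (rule ccontr)
        assume "\<not> lam (g i) < lam ?x"
        then have "lam ?x < lam (g i)" using lneq[OF a] by auto
        then have "lam v < lam (g i)" using l213[OF a Big_anc[OF v]] by auto
        then show False using \<open>lam (g i) < lam v\<close> by simp
      qed
    qed (use lv in simp)
    show "lam v < lam (g i) \<longleftrightarrow> lam ?x < lam (g i)"
    proof
      assume "lam ?x < lam (g i)"
      then show "lam v < lam (g i)" using l213[OF a Big_anc[OF v]] by auto
    qed (use lv in simp)
  qed
  show ?thesis unfolding inst_def
  proof (intro conjI allI impI)
    fix i assume "i < L" then show "(g(L - 1 := v)) i \<in> {1..n}" using inst_in[OF g] vin by auto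
  next
    fix i j assume "i < j" "j < L" then show "anc ((g(L - 1 := v)) i) ((g(L - 1 := v)) j)" by (rule ch)
  next
    fix i j assume ij: "i < L" "j < L"
    show "lam ((g(L - 1 := v)) i) < lam ((g(L - 1 := v)) j) \<longleftrightarrow> r ! i < r ! j"
    proof (cases "i = L - 1"; cases "j = L - 1")
      assume "i = L - 1" "j = L - 1" then show ?thesis using iso[OF g ij] by simp
    next
      assume "i = L - 1" "j \<noteq> L - 1" then show ?thesis using iso[OF g ij] cmp(2)[of j] ij by simp
    next
      assume "i \<noteq> L - 1" "j = L - 1" then show ?thesis using iso[OF g ij] cmp(1)[of i] ij by simp
    next
      assume "i \<noteq> L - 1" "j \<noteq> L - 1" then show ?thesis using iso[OF g ij] by simp
    qed
  qed
qed

lemma closure: "x \<in> X \<Longrightarrow> v \<in> B x \<Longrightarrow> v \<in> X"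
  by (metis XsE XsI repl_last fun_upd_same)

lemma U_sub_X: "U \<subseteq> X"
  unfolding Us_def using closure by auto

lemma Big_trans: "y \<in> B y' \<Longrightarrow> v \<in> B y \<Longrightarrow> v \<in> B y'"
  unfolding Big_def using anc_trans by auto

lemma top_exists: assumes "v \<in> U" shows "\<exists>t\<in>T. v \<in> B t"
proof -
  have "\<forall>y. depth f y = d \<longrightarrow> y \<in> X \<longrightarrow> v \<in> B y \<longrightarrow> (\<exists>t\<in>T. v \<in> B t)" for d
  proof (induction d rule: less_induct)
    case (less d)
    show ?case
    proof (intro allI impI)
      fix y assume y: "depth f y = d" "y \<in> X" "v \<in> B y"
      show "\<exists>t\<in>T. v \<in> B t"
      proof (cases "y \<in> U")
        case False then show ?thesis using y unfolding Tops_def by auto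
      next
        case True
        then obtain y' where y': "y' \<in> X" "y \<in> B y'" unfolding Us_def by auto
        have "depth f y' < d" using depth_less[OF F Big_anc[OF y'(2)]] y by simp
        then show ?thesis using less y' Big_trans[OF y'(2) y(3)] by blast
      qed
    qed
  qed
  then show ?thesis using assms unfolding Us_def by blast
qed

lemma top_unique:
  assumes "t \<in> T" "t' \<in> T" "v \<in> B t" "v \<in> B t'" shows "t = t'"
proof (rule ccontr)
  assume ne: "t \<noteq> t'"
  have "anc t v" "anc t' v" using assms Big_anc by auto
  then have "anc t t' \<or> anc t' t" using anc_linear ne by blast
  then show False
  proof
    assume a: "anc t t'"
    have "lam t < lam t'" by (rule lB[OF a Big_anc[OF assms(4)] Big_lam[OF assms(3)]])
    then have "t' \<in> U" using a assms(1) unfolding Us_def Tops_def Big_def by auto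
    then show False using assms(2) unfolding Tops_def by auto
  next
    assume a: "anc t' t"
    have "lam t' < lam t" by (rule lB[OF a Big_anc[OF assms(3)] Big_lam[OF assms(4)]])
    then have "t \<in> U" using a assms(2) unfolding Us_def Tops_def Big_def by auto
    then show False using assms(1) unfolding Tops_def by auto
  qed
qed

end

context L213 begin

definition cnt :: "(nat \<Rightarrow> nat) \<Rightarrow> nat" where
  "cnt g = card {i. i < L - 1 \<and> g i \<in> U}"

lemma cnt_less:
  assumes "\<And>i. i < L - 1 \<Longrightarrow> g' i \<in> U \<Longrightarrow> g i \<in> U \<and> i \<noteq> i0" "i0 < L - 1" "g i0 \<in> U"
  shows "cnt g' < cnt g"
proof -
  have "{i. i < L - 1 \<and> g' i \<in> U} \<subseteq> {i. i < L - 1 \<and> g i \<in> U} - {i0}" using assms(1) by auto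
  moreover have "finite {i. i < L - 1 \<and> g i \<in> U}" by auto
  moreover have "i0 \<in> {i. i < L - 1 \<and> g i \<in> U}" using assms by auto
  ultimately show ?thesis unfolding cnt_def
    by (meson card_Diff1_less card_mono finite_Diff le_less_trans)
qed

lemma mk_inst:
  assumes "\<And>i. i < L \<Longrightarrow> g i \<in> {1..n}"
    "\<And>i j. i < j \<Longrightarrow> j < L \<Longrightarrow> anc (g i) (g j)"
    "\<And>i j. i < j \<Longrightarrow> j < L \<Longrightarrow> (r ! i < r ! j \<and> lam (g i) < lam (g j)) \<or> (r ! j < r ! i \<and> lam (g j) < lam (g i))"
  shows "ins g"
  unfolding inst_def
proof (intro conjI allI impI)
  fix i j assume ij: "i < L" "j < L"
  consider "i < j" | "i = j" | "j < i" by arith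
  then show "lam (g i) < lam (g j) \<longleftrightarrow> r ! i < r ! j"
  proof cases
    case 1 then show ?thesis using assms(3)[OF 1 ij(2)] by auto
  next
    case 2 then show ?thesis by simp
  next
    case 3 then show ?thesis using assms(3)[OF 3 ij(1)] by auto
  qed
qed (use assms in auto)

lemma inst_pair:
  assumes "ins g" "i < j" "j < L"
  shows "(r ! i < r ! j \<and> lam (g i) < lam (g j)) \<or> (r ! j < r ! i \<and> lam (g j) < lam (g i))"
proof -
  have "lam (g i) \<noteq> lam (g j)" using lneq inst_anc[OF assms] by blast
  then show ?thesis using iso[OF assms(1), of i j] iso[OF assms(1), of j i] assms by auto
qed

lemma improve2:
  assumes g: "ins g" "g (L - 1) = w"
    and i0: "i0 < L - 1" "g i0 \<in> U" "g i0 \<in> B t"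
    and t: "t \<in> T" and J: "ins J" "J (L - 1) = t" "\<And>i. i < L - 1 \<Longrightarrow> J i \<notin> U"
    and tw: "anc t w" "w \<notin> B t"
  shows "\<exists>g'. ins g' \<and> g' (L - 1) = w \<and> cnt g' < cnt g"
proof -
  define a where "a = r ! (L - 1)"
  have L1: "L - 1 < L" using R by (cases r) auto
  have lwt: "lam w < lam t" using tw lneq[OF tw(1)] unfolding Big_def by auto
  define i1 where "i1 = (LEAST i. i < L - 1 \<and> g i \<in> B t)"
  have i1: "i1 < L - 1" "g i1 \<in> B t" "i1 \<le> i0"
    using LeastI[of "\<lambda>i. i < L - 1 \<and> g i \<in> B t" i0] Least_le[of "\<lambda>i. i < L - 1 \<and> g i \<in> B t" i0] i0
    unfolding i1_def by auto
  have i1b: "g i \<notin> B t" if "i < i1" for i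
    using not_less_Least[of i "\<lambda>i. i < L - 1 \<and> g i \<in> B t"] that i1 unfolding i1_def by auto
  define Pn where "Pn = (LEAST p. i1 < p \<and> p < L \<and> (r ! p < a \<or> p = L - 1))"
  have Pn: "i1 < Pn" "Pn < L" "r ! Pn < a \<or> Pn = L - 1"
    using LeastI[of "\<lambda>p. i1 < p \<and> p < L \<and> (r ! p < a \<or> p = L - 1)" "L - 1"] i1 L1
    unfolding Pn_def by auto
  have Pnb: "\<not> r ! p < a" if "i1 < p" "p < Pn" for p
    using not_less_Least[of p "\<lambda>p. i1 < p \<and> p < L \<and> (r ! p < a \<or> p = L - 1)"] that Pn
    unfolding Pn_def by auto
  define P where "P = Pn - 1"
  have P: "i1 \<le> P" "P < Pn" "P < L - 1" using Pn i1 unfolding P_def by auto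
  have K1: "lam (g Pn) \<le> lam w"
  proof (cases "Pn = L - 1")
    case True then show ?thesis using g by simp
  next
    case False
    then have "r ! Pn < a" using Pn by simp
    then show ?thesis using iso[OF g(1) Pn(2) L1] g(2) unfolding a_def by simp
  qed
  have ati1: "anc t (g i1)" using Big_anc[OF i1(2)] .
  have K2: "anc t (g q) \<and> lam (g q) < lam t" if "Pn \<le> q" "q < L" for q
  proof -
    have aq: "anc t (g q)" using anc_trans[OF ati1 inst_anc[OF g(1), of i1 q]] that Pn by auto
    have "lam (g q) < lam t"
    proof (cases "q = Pn")
      case True then show ?thesis using K1 lwt by simp
    next
      case False
      show ?thesis
      proof (rule ccontr)
        assume "\<not> lam (g q) < lam t"
        then have "lam t < lam (g q)" using lneq[OF aq] by auto
        moreover have "anc t (g Pn)" using anc_trans[OF ati1 inst_anc[OF g(1), of i1 Pn]] Pn by auto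
        moreover have "anc (g Pn) (g q)" using inst_anc[OF g(1), of Pn q] that False by auto
        ultimately have "lam t < lam (g Pn)" using lB by blast
        then show False using K1 lwt by simp
      qed
    qed
    then show ?thesis using aq by simp
  qed
  have i0P: "i0 \<le> P"
  proof (rule ccontr)
    assume "\<not> i0 \<le> P"
    then have "Pn \<le> i0" using P unfolding P_def by auto
    then have "lam (g i0) < lam t" using K2 i0 by auto
    then show False using Big_lam[OF i0(3)] by simp
  qed
  have Jt: "lam t < lam (J p) \<longleftrightarrow> a < r ! p" if "p < L - 1" for p
    using iso[OF J(1), of "L - 1" p] J(2) that L1 unfolding a_def by auto
  have Jat: "anc (J p) t" if "p < L - 1" for p
    using inst_anc[OF J(1), of p "L - 1"] J(2) that by auto
  have ra: "r ! p \<noteq> a" if "p < L - 1" for p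
    using rho_neq[OF g(1), of p "L - 1"] that L1 unfolding a_def by auto
  have K5: "a < r ! i1"
  proof -
    have "lam (g (L - 1)) < lam (g i1)" using g(2) lwt Big_lam[OF i1(2)] by simp
    then show ?thesis using iso[OF g(1), of "L - 1" i1] L1 i1 unfolding a_def by auto
  qed
  have K6: "r ! q < r ! p" if "a < r ! p" "p \<le> P" "P < q" "q < L" for p q
  proof (cases "q = Pn")
    case True
    then have "r ! q \<le> a" using Pn unfolding a_def by auto
    then show ?thesis using that by simp
  next
    case False
    then have q: "Pn < q" using that P unfolding P_def by auto
    then have "r ! Pn < a" using Pn that by auto
    then have "\<not> (r ! Pn < r ! p \<and> r ! p < r ! q)" using rho213[OF g(1), of p Pn q] that P q by auto
    then have "\<not> r ! p < r ! q" using \<open>r ! Pn < a\<close> that by auto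
    moreover have "r ! p \<noteq> r ! q" using rho_neq[OF g(1), of p q] that P q by auto
    ultimately show ?thesis by auto
  qed
  have lowpos: "p < i1" if "p \<le> P" "r ! p < a" for p
  proof (rule ccontr)
    assume "\<not> p < i1"
    then consider "p = i1" | "i1 < p" by arith
    then show False
    proof cases
      case 1 then show False using K5 that by simp
    next
      case 2 then show False using Pnb[of p] that P by auto
    qed
  qed
  show ?thesis
  proof (cases "\<forall>p<i1. r ! p < a \<longrightarrow> lam (J p) < lam w")
    case C1: True
    define g' where "g' = (\<lambda>i. if i \<le> P then J i else g i)"
    have "ins g'"
    proof (rule mk_inst)
      fix i assume "i < L" then show "g' i \<in> {1..n}" using inst_in[OF g(1)] inst_in[OF J(1)] unfolding g'_def by auto
    next
      fix i j assume ij: "i < j" "j < L"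
      show "anc (g' i) (g' j)"
      proof (cases "j \<le> P")
        case True then show ?thesis using inst_anc[OF J(1) ij] ij unfolding g'_def by auto
      next
        case False
        show ?thesis
        proof (cases "i \<le> P")
          case True
          have "anc (J i) t" using Jat True P by auto
          moreover have "anc t (g j)" using K2[of j] False ij P unfolding P_def by auto
          ultimately show ?thesis using True False anc_trans unfolding g'_def by auto
        next
          case False2: False
          then show ?thesis using inst_anc[OF g(1) ij] False unfolding g'_def by auto
        qed
      qed
    next
      fix i j assume ij: "i < j" "j < L"
      show "(r ! i < r ! j \<and> lam (g' i) < lam (g' j)) \<or> (r ! j < r ! i \<and> lam (g' j) < lam (g' i))"
      proof (cases "j \<le> P")
        case True then show ?thesis using inst_pair[OF J(1) ij] unfolding g'_def using ij by auto
      next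
        case jP: False
        show ?thesis
        proof (cases "i \<le> P")
          case iP: True
          have gj: "anc t (g j)" "lam (g j) < lam t" using K2[of j] jP ij P unfolding P_def by auto
          have il: "i < L - 1" using iP P by auto
          show ?thesis
          proof (cases "a < r ! i")
            case True
            have "lam t < lam (J i)" using Jt[OF il] True by simp
            moreover have "r ! j < r ! i" using K6[of i j] True iP jP ij by auto
            ultimately show ?thesis using gj iP jP unfolding g'_def by auto
          next
            case False
            then have ria: "r ! i < a" using ra[OF il] by auto
            then have "i < i1" using lowpos iP by auto
            then have lJ: "lam (J i) < lam w" using C1 ria by auto
            have "r ! i < r ! j" using R1[OF g(1) ij] ria unfolding a_def by auto
            moreover have "lam (J i) < lam (g j)"
            proof (cases "j = L - 1")
              case True then show ?thesis using lJ g by simp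
            next
              case False
              have "anc (J i) (g j)" using anc_trans[OF Jat[OF il] gj(1)] .
              moreover have "anc (g j) w" using inst_anc[OF g(1), of j "L - 1"] g(2) ij False by auto
              ultimately show ?thesis using lB lJ by blast
            qed
            ultimately show ?thesis using iP jP unfolding g'_def by auto
          qed
        next
          case False
          then show ?thesis using inst_pair[OF g(1) ij] jP unfolding g'_def by auto
        qed
      qed
    qed
    moreover have "g' (L - 1) = w" using P g unfolding g'_def by auto
    moreover have "cnt g' < cnt g"
    proof (rule cnt_less[of g' g i0])
      fix i assume "i < L - 1" "g' i \<in> U"
      then show "g i \<in> U \<and> i \<noteq> i0" using J(3) i0P unfolding g'_def by (auto split: if_splits)
    qed (use i0 in auto)
    ultimately show ?thesis by blast
  next
    case C2: False
    define S where "S = {p. p < i1 \<and> r ! p < a}"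
    obtain p0 where p0: "p0 < i1" "r ! p0 < a" "\<not> lam (J p0) < lam w" using C2 by auto
    have finS: "finite S" unfolding S_def by auto
    have p0S: "p0 \<in> S" using p0 unfolding S_def by auto
    define P0 where "P0 = Max S"
    have "P0 \<in> S" using Max_in[OF finS] p0S unfolding P0_def by auto
    then have P0: "P0 < i1" "r ! P0 < a" unfolding S_def by auto
    have P0b: "\<not> r ! p < a" if "P0 < p" "p < i1" for p
    proof
      assume "r ! p < a"
      then have "p \<in> S" using that unfolding S_def by auto
      then have "p \<le> P0" using Max_ge[OF finS] unfolding P0_def by auto
      then show False using that by simp
    qed
    have p0le: "p0 \<le> P0" using Max_ge[OF finS p0S] unfolding P0_def .
    have lJP0: "lam w < lam (J P0)"
    proof -
      have "anc (J p0) w" using anc_trans[OF Jat tw(1)] p0 i1 by auto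
      then have "lam w < lam (J p0)" using p0(3) lneq by (metis nat_neq_iff)
      moreover have "lam (J p0) \<le> lam (J P0)"
      proof (cases "p0 = P0")
        case False
        then have "r ! p0 < r ! P0" using R1[OF J(1), of p0 P0] p0le p0 P0 i1 unfolding a_def by auto
        moreover have "p0 < L" "P0 < L" using P0 i1 p0 by auto
        ultimately show ?thesis using iso[OF J(1), of p0 P0] by auto
      qed simp
      ultimately show ?thesis by simp
    qed
    have lgP0: "lam (g P0) < lam w"
      using iso[OF g(1), of P0 "L - 1"] P0 i1 g(2) L1 unfolding a_def by auto
    have a0: "anc (g P0) t"
    proof -
      have "anc (g P0) (g i1)" using inst_anc[OF g(1), of P0 i1] P0 i1 by auto
      then have "g P0 = t \<or> anc (g P0) t \<or> anc t (g P0)" using anc_linear ati1 by blast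
      moreover have "g P0 \<noteq> t" using lgP0 lwt by auto
      moreover have "\<not> anc t (g P0)"
      proof
        assume "anc t (g P0)"
        then have "lam t < lam (g P0)" using lB[OF _ \<open>anc (g P0) (g i1)\<close> Big_lam[OF i1(2)]] by blast
        then show False using lgP0 lwt by simp
      qed
      ultimately show ?thesis by blast
    qed
    have a1: "anc (g P0) (J P0)"
    proof -
      have jt: "anc (J P0) t" using Jat P0 i1 by auto
      then have "g P0 = J P0 \<or> anc (g P0) (J P0) \<or> anc (J P0) (g P0)" using anc_linear a0 by blast
      moreover have "g P0 \<noteq> J P0" using lgP0 lJP0 by auto
      moreover have "\<not> anc (J P0) (g P0)"
      proof
        assume b: "anc (J P0) (g P0)"
        have "lam (J P0) < lam t" using Jt[of P0] P0 i1 ra[of P0] lneq[OF jt] by auto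
        then have "lam (J P0) < lam (g P0)" using lB[OF b a0] by blast
        then show False using lgP0 lJP0 by simp
      qed
      ultimately show ?thesis by blast
    qed
    have mid: "a < r ! q" if "P0 < q" "q \<le> P" for q
    proof -
      have ql: "q < L - 1" using that P by auto
      have "\<not> r ! q < a"
      proof (cases "q < i1")
        case True then show ?thesis using P0b that by auto
      next
        case False
        then consider "q = i1" | "i1 < q" by arith
        then show ?thesis
        proof cases
          case 1 then show ?thesis using K5 by simp
        next
          case 2 then show ?thesis using Pnb[of q] that P by auto
        qed
      qed
      then show ?thesis using ra[OF ql] by auto
    qed
    define g' where "g' = (\<lambda>i. if i \<le> P0 then g i else if i \<le> P then J i else g i)"
    have gP0J: "anc (g i) (J j)" if "i \<le> P0" "P0 < j" "j < L" for i j
    proof -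
      have "anc (J P0) (J j)" using inst_anc[OF J(1)] that by auto
      then have x: "anc (g P0) (J j)" using anc_trans[OF a1] by blast
      show ?thesis
      proof (cases "i = P0")
        case True then show ?thesis using x by simp
      next
        case False
        then show ?thesis using anc_trans[OF inst_anc[OF g(1), of i P0] x] that P0 i1 by auto
      qed
    qed
    have "ins g'"
    proof (rule mk_inst)
      fix i assume "i < L" then show "g' i \<in> {1..n}" using inst_in[OF g(1)] inst_in[OF J(1)] unfolding g'_def by auto
    next
      fix i j assume ij: "i < j" "j < L"
      show "anc (g' i) (g' j)"
      proof (cases "j \<le> P0")
        case True then show ?thesis using inst_anc[OF g(1) ij] ij unfolding g'_def by auto
      next
        case jP0: False
        show ?thesis
        proof (cases "j \<le> P")
          case jP: True
          show ?thesis
          proof (cases "i \<le> P0")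
            case True then show ?thesis using gP0J[of i j] jP0 jP ij unfolding g'_def by auto
          next
            case False then show ?thesis using inst_anc[OF J(1) ij] jP0 jP ij unfolding g'_def by auto
          qed
        next
          case jP: False
          show ?thesis
          proof (cases "i \<le> P0")
            case True then show ?thesis using inst_anc[OF g(1) ij] jP0 jP unfolding g'_def by auto
          next
            case iP0: False
            show ?thesis
            proof (cases "i \<le> P")
              case True
              have "anc (J i) t" using Jat True P by auto
              moreover have "anc t (g j)" using K2[of j] jP ij P unfolding P_def by auto
              ultimately show ?thesis using True iP0 jP0 jP anc_trans unfolding g'_def by auto
            next
              case False then show ?thesis using inst_anc[OF g(1) ij] jP0 jP iP0 unfolding g'_def by auto
            qed
          qed
        qed
      qed
    next
      fix i j assume ij: "i < j" "j < L"
      show "(r ! i < r ! j \<and> lam (g' i) < lam (g' j)) \<or> (r ! j < r ! i \<and> lam (g' j) < lam (g' i))"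
      proof (cases "j \<le> P0")
        case True then show ?thesis using inst_pair[OF g(1) ij] ij unfolding g'_def by auto
      next
        case jP0: False
        show ?thesis
        proof (cases "j \<le> P")
          case jP: True
          have rj: "a < r ! j" using mid jP0 jP by auto
          have lJj: "lam t < lam (J j)" using Jt[of j] rj jP P by auto
          show ?thesis
          proof (cases "i \<le> P0")
            case iP0: True
            have il: "i < L - 1" using iP0 P0 i1 by auto
            show ?thesis
            proof (cases "r ! i < a")
              case True
              have "lam (g i) < lam w" using iso[OF g(1), of i "L - 1"] True il L1 g(2) unfolding a_def by auto
              then show ?thesis using True rj lJj lwt iP0 jP0 jP unfolding g'_def by auto
            next
              case False
              then have ria: "a < r ! i" using ra[OF il] by auto
              then have iP0': "i < P0" using iP0 P0 by (cases "i = P0") auto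
              have "\<not> (r ! P0 < r ! i \<and> r ! i < r ! j)" using rho213[OF g(1) iP0', of j] jP0 ij by auto
              then have "\<not> r ! i < r ! j" using P0 ria by auto
              moreover have "r ! i \<noteq> r ! j" using rho_neq[OF g(1), of i j] ij by auto
              ultimately have rji: "r ! j < r ! i" by auto
              have "lam (g P0) < lam (g i)" using iso[OF g(1), of P0 i] P0 ria iP0' il i1 by auto
              moreover have "anc (g i) (g P0)" using inst_anc[OF g(1) iP0'] P0 i1 by auto
              moreover have "anc (g P0) (J j)" using gP0J[of P0 j] jP0 ij by auto
              ultimately have "lam (J j) < lam (g i)" using l213 by blast
              then show ?thesis using rji iP0 jP0 jP unfolding g'_def by auto
            qed
          next
            case False then show ?thesis using inst_pair[OF J(1) ij] jP0 jP ij unfolding g'_def by auto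
          qed
        next
          case jP: False
          show ?thesis
          proof (cases "i \<le> P0")
            case True then show ?thesis using inst_pair[OF g(1) ij] jP0 jP unfolding g'_def by auto
          next
            case iP0: False
            show ?thesis
            proof (cases "i \<le> P")
              case iP: True
              have gj: "lam (g j) < lam t" using K2[of j] jP ij P unfolding P_def by auto
              have ri: "a < r ! i" using mid iP0 iP by auto
              have "lam t < lam (J i)" using Jt[of i] ri iP P by auto
              moreover have "r ! j < r ! i" using K6[of i j] ri iP jP ij by auto
              ultimately show ?thesis using gj iP0 iP jP0 jP unfolding g'_def by auto
            next
              case False then show ?thesis using inst_pair[OF g(1) ij] jP0 jP iP0 unfolding g'_def by auto
            qed
          qed
        qed
      qed
    qed
    moreover have "g' (L - 1) = w" using P g unfolding g'_def by auto
    moreover have "cnt g' < cnt g"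
    proof (rule cnt_less[of g' g i0])
      fix i assume "i < L - 1" "g' i \<in> U"
      then show "g i \<in> U \<and> i \<noteq> i0" using J(3) i0P P0 i1 unfolding g'_def by (auto split: if_splits)
    qed (use i0 in auto)
    ultimately show ?thesis by blast
  qed
qed

end

context L213 begin

lemma T_sub_X: "T \<subseteq> X" unfolding Tops_def by auto

lemma improve:
  assumes g: "ins g" "g (L - 1) = w" and i0: "i0 < L - 1" "g i0 \<in> U"
    and IH: "\<And>y. anc y w \<Longrightarrow> y \<in> X \<Longrightarrow> \<exists>J. ins J \<and> J (L - 1) = y \<and> (\<forall>i<L - 1. J i \<notin> U)"
  shows "\<exists>g'. ins g' \<and> g' (L - 1) = w \<and> cnt g' < cnt g"
proof -
  obtain t where t: "t \<in> T" "g i0 \<in> B t" using top_exists[OF i0(2)] by blast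
  have tw: "anc t w" using anc_trans[OF Big_anc[OF t(2)] inst_anc[OF g(1) i0(1)]] g(2) i0 by auto
  obtain J where J: "ins J" "J (L - 1) = t" "\<forall>i<L - 1. J i \<notin> U" using IH[OF tw] t T_sub_X by blast
  show ?thesis
  proof (cases "w \<in> B t")
    case True
    define g' where "g' = J(L - 1 := w)"
    have "ins g'" unfolding g'_def using repl_last[OF J(1)] J(2) True by simp
    moreover have "g' (L - 1) = w" unfolding g'_def by simp
    moreover have "cnt g' < cnt g"
      by (rule cnt_less[of g' g i0]) (use J(3) i0 in \<open>auto simp: g'_def\<close>)
    ultimately show ?thesis by blast
  next
    case False
    show ?thesis by (rule improve2[OF g i0 t(2) t(1) J(1,2)]) (use J(3) tw False in auto)
  qed
qed

lemma hstar: "w \<in> X \<Longrightarrow> \<exists>g. ins g \<and> g (L - 1) = w \<and> (\<forall>i<L - 1. g i \<notin> U)"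
proof -
  have "\<forall>w. depth f w = d \<longrightarrow> w \<in> X \<longrightarrow> (\<exists>g. ins g \<and> g (L - 1) = w \<and> (\<forall>i<L - 1. g i \<notin> U))" for d
  proof (induction d rule: less_induct)
    case (less d)
    show ?case
    proof (intro allI impI)
      fix w assume w: "depth f w = d" "w \<in> X"
      have IH: "\<exists>J. ins J \<and> J (L - 1) = y \<and> (\<forall>i<L - 1. J i \<notin> U)" if "anc y w" "y \<in> X" for y
        using less[of "depth f y"] depth_less[OF F that(1)] w that by blast
      obtain g0 where g0: "ins g0" "g0 (L - 1) = w" using w(2) by (rule XsE)
      obtain g where g: "ins g" "g (L - 1) = w" and gmin: "\<And>g'. ins g' \<and> g' (L - 1) = w \<Longrightarrow> cnt g \<le> cnt g'"
        using ex_has_least_nat[of "\<lambda>g. ins g \<and> g (L - 1) = w" g0 cnt] g0 by blast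
      have "\<forall>i<L - 1. g i \<notin> U"
      proof (rule ccontr)
        assume "\<not> (\<forall>i<L - 1. g i \<notin> U)"
        then obtain i0 where "i0 < L - 1" "g i0 \<in> U" by auto
        then obtain g' where "ins g'" "g' (L - 1) = w" "cnt g' < cnt g"
          using improve[OF g _ _ IH] by blast
        then show False using gmin[of g'] by auto
      qed
      then show "\<exists>g. ins g \<and> g (L - 1) = w \<and> (\<forall>i<L - 1. g i \<notin> U)" using g by blast
    qed
  qed
  then show "w \<in> X \<Longrightarrow> ?thesis" by blast
qed

end

definition ix :: "nat list \<Rightarrow> nat \<Rightarrow> nat" where
  "ix l v = (THE i. i < length l \<and> l ! i = v)"

definition rvl :: "nat list \<Rightarrow> nat \<Rightarrow> nat" where
  "rvl l v = l ! (length l - 1 - ix l v)"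

definition rv :: "nat set \<Rightarrow> nat \<Rightarrow> nat" where
  "rv S v = rvl (sorted_list_of_set S) v"

lemma ss_lt: "sorted_wrt (<) (l::nat list) \<Longrightarrow> i < length l \<Longrightarrow> j < length l \<Longrightarrow> (l ! i < l ! j \<longleftrightarrow> i < j)"
proof
  assume a: "sorted_wrt (<) l" "i < length l" "j < length l" "l ! i < l ! j"
  show "i < j"
  proof (rule ccontr)
    assume "\<not> i < j"
    then consider "i = j" | "j < i" by arith
    then show False
    proof cases
      case 1 then show False using a by simp
    next
      case 2 then have "l ! j < l ! i" using sorted_wrt_nth_less[OF a(1) 2 a(2)] by simp
      then show False using a by simp
    qed
  qed
next
  assume "sorted_wrt (<) l" "i < length l" "j < length l" "i < j"
  then show "l ! i < l ! j" using sorted_wrt_nth_less by blast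
qed

lemma ss_distinct: "sorted_wrt (<) (l::nat list) \<Longrightarrow> distinct l"
  using strict_sorted_iff by blast

lemma ix_prop: assumes "sorted_wrt (<) l" "v \<in> set l" shows "ix l v < length l" "l ! ix l v = v"
proof -
  have "\<exists>!i. i < length l \<and> l ! i = v" using distinct_Ex1[OF ss_distinct[OF assms(1)] assms(2)] .
  then have "ix l v < length l \<and> l ! ix l v = v" unfolding ix_def by (rule theI')
  then show "ix l v < length l" "l ! ix l v = v" by auto
qed

lemma ix_nth: assumes "sorted_wrt (<) l" "i < length l" shows "ix l (l ! i) = i"
proof -
  have e: "\<exists>!i'. i' < length l \<and> l ! i' = l ! i" using distinct_Ex1[OF ss_distinct[OF assms(1)]] assms(2) by auto
  show ?thesis unfolding ix_def by (rule the1_equality[OF e]) (use assms(2) in auto)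
qed

lemma rvl_props:
  assumes "sorted_wrt (<) l" "u \<in> set l" "v \<in> set l"
  shows "rvl l v \<in> set l" "rvl l (rvl l v) = v" "rvl l u < rvl l v \<longleftrightarrow> v < u"
proof -
  have iv: "ix l v < length l" "l ! ix l v = v" using ix_prop[OF assms(1,3)] by auto
  have iu: "ix l u < length l" "l ! ix l u = u" using ix_prop[OF assms(1,2)] by auto
  show "rvl l v \<in> set l" unfolding rvl_def using iv by auto
  have "ix l (rvl l v) = length l - 1 - ix l v" unfolding rvl_def using ix_nth[OF assms(1)] iv by auto
  moreover have "length l - 1 - (length l - 1 - ix l v) = ix l v" using iv(1) by arith
  ultimately show "rvl l (rvl l v) = v" using iv(2) by (simp add: rvl_def[of l "rvl l v"])
  have "rvl l u < rvl l v \<longleftrightarrow> length l - 1 - ix l u < length l - 1 - ix l v"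
    unfolding rvl_def using ss_lt[OF assms(1)] iu iv by auto
  also have "\<dots> \<longleftrightarrow> ix l v < ix l u" using iu iv by auto
  also have "\<dots> \<longleftrightarrow> v < u" using ss_lt[OF assms(1) iv(1) iu(1)] iu iv by simp
  finally show "rvl l u < rvl l v \<longleftrightarrow> v < u" .
qed

lemma rv_props:
  assumes "finite S" "u \<in> S" "v \<in> S"
  shows "rv S v \<in> S" "rv S (rv S v) = v" "rv S u < rv S v \<longleftrightarrow> v < u"
proof -
  have s: "sorted_wrt (<) (sorted_list_of_set S)" using strict_sorted_list_of_set by blast
  have e: "set (sorted_list_of_set S) = S" using set_sorted_list_of_set[OF assms(1)] .
  show "rv S v \<in> S" "rv S (rv S v) = v" "rv S u < rv S v \<longleftrightarrow> v < u"
    unfolding rv_def using rvl_props[OF s] assms e by auto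
qed

definition sig :: "nat \<Rightarrow> (nat \<Rightarrow> nat) \<Rightarrow> nat list \<Rightarrow> nat \<Rightarrow> nat" where
  "sig n f r v = (if v \<in> Us n f id r then rv (Big f id (THE t. t \<in> Tops n f id r \<and> v \<in> Big f id t)) v else v)"

locale S213 = L213 n f id r for n f r
begin

abbreviation "sg \<equiv> sig n f r"

lemmas lBi = lB[unfolded id_apply]
lemmas l213i = l213[unfolded id_apply]
lemmas lneqi = lneq[unfolded id_apply]
lemma Big_lami: "v \<in> B x \<Longrightarrow> x < v" using Big_lam by simp

definition sameblk :: "nat \<Rightarrow> nat \<Rightarrow> bool" where
  "sameblk u v \<longleftrightarrow> (\<exists>t\<in>T. u \<in> B t \<and> v \<in> B t)"

lemma finB: "finite (B x)"
  by (rule finite_subset[of _ "{1..n}"]) (use anc_in[OF F] in \<open>auto simp: Big_def\<close>)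

lemma B_U: "t \<in> T \<Longrightarrow> B t \<subseteq> U"
  unfolding Us_def Tops_def by auto

lemma U_in: "v \<in> U \<Longrightarrow> v \<in> {1..n}"
  unfolding Us_def Big_def using anc_in[OF F] by auto

lemma T_notU: "t \<in> T \<Longrightarrow> t \<notin> U" unfolding Tops_def by auto

lemma sig_block: assumes "t \<in> T" "v \<in> B t" shows "sg v = rv (B t) v"
proof -
  have "v \<in> U" using B_U assms by auto
  moreover have "(THE t. t \<in> T \<and> v \<in> B t) = t"
    by (rule the1_equality) (use assms top_unique in auto)
  ultimately show ?thesis unfolding sig_def by simp
qed

lemma sig_out: "v \<notin> U \<Longrightarrow> sg v = v" unfolding sig_def by simp

lemma sig_B: assumes "t \<in> T" "v \<in> B t" shows "sg v \<in> B t"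
  using sig_block[OF assms] rv_props(1)[OF finB assms(2) assms(2)] by simp

lemma sig_ord: assumes "t \<in> T" "u \<in> B t" "v \<in> B t" shows "sg u < sg v \<longleftrightarrow> v < u"
  using sig_block[OF assms(1,2)] sig_block[OF assms(1,3)] rv_props(3)[OF finB assms(2,3)] by simp

lemma sig_inv: "sg (sg v) = v"
proof (cases "v \<in> U")
  case True
  then obtain t where t: "t \<in> T" "v \<in> B t" using top_exists by blast
  have "sg (sg v) = rv (B t) (rv (B t) v)" using sig_block[OF t] sig_block[OF t(1) sig_B[OF t]] by simp
  then show ?thesis using rv_props(2)[OF finB t(2) t(2)] by simp
next
  case False then show ?thesis using sig_out by simp
qed

lemma sig_U: "sg v \<in> U \<longleftrightarrow> v \<in> U"
proof
  assume "v \<in> U"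
  then obtain t where t: "t \<in> T" "v \<in> B t" using top_exists by blast
  then show "sg v \<in> U" using sig_B B_U by blast
next
  assume a: "sg v \<in> U"
  show "v \<in> U"
  proof (rule ccontr)
    assume "v \<notin> U" then show False using a sig_out by simp
  qed
qed

lemma sig_rng: "sg v \<in> {1..n} \<longleftrightarrow> v \<in> {1..n}"
  by (metis U_in sig_U sig_out)

lemma sig_0: "sg 0 = 0"
  using U_in sig_out by force

lemma sig_inj: "inj sg"
  by (metis injI sig_inv)

lemma uniform:
  assumes t: "t \<in> T" and b: "b \<in> B t" "b' \<in> B t" and z: "z \<notin> B t" and c: "anc z b \<or> anc b z"
  shows "z < b \<longleftrightarrow> z < b'"
proof -
  have tb: "t < b" "t < b'" using b Big_lami by auto
  have atb: "anc t b" "anc t b'" using b Big_anc by auto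
  from c show ?thesis
  proof
    assume zb: "anc z b"
    then have "z = t \<or> anc z t \<or> anc t z" using anc_linear atb(1) by blast
    moreover have "\<not> anc t z"
    proof
      assume "anc t z"
      then have "t < z" using lBi[OF _ zb tb(1)] by simp
      then show False using z \<open>anc t z\<close> unfolding Big_def by auto
    qed
    moreover have "z < b \<longleftrightarrow> z < b'" if "anc z t"
    proof -
      have "z \<noteq> t" using that anc_neq[OF F] by blast
      then consider "z < t" | "t < z" by arith
      then show ?thesis
      proof cases
        case 1 then show ?thesis using tb by simp
      next
        case 2
        then have "b < z" "b' < z" using l213i[OF that atb(1)] l213i[OF that atb(2)] by auto
        then show ?thesis by simp
      qed
    qed
    ultimately show ?thesis using tb by auto
  next
    assume bz: "anc b z"
    then have tz: "anc t z" using anc_trans atb(1) by blast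
    then have "\<not> t < z" using z unfolding Big_def by auto
    moreover have "z \<noteq> t" using tz anc_neq[OF F] by blast
    ultimately show ?thesis using tb by auto
  qed
qed

lemma blocks_order:
  assumes t: "t \<in> T" "t' \<in> T" "t \<noteq> t'" and b: "b \<in> B t" "b' \<in> B t'" "anc b b'"
    and xy: "x \<in> B t" "y \<in> B t'"
  shows "y < x"
proof -
  have atb': "anc t' b'" using b Big_anc by auto
  then have "t' = b \<or> anc t' b \<or> anc b t'" using anc_linear b(3) by blast
  moreover have "t' \<noteq> b" using T_notU[OF t(2)] B_U[OF t(1)] b(1) by auto
  moreover have "\<not> anc t' b"
  proof
    assume a: "anc t' b"
    then have "t' < b" using lBi[OF a b(3)] Big_lami[OF b(2)] by simp
    then have "b \<in> B t'" using a unfolding Big_def by simp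
    then show False using top_unique[OF t(1,2) b(1)] t(3) by simp
  qed
  ultimately have bt': "anc b t'" by blast
  have tt': "anc t t'" using anc_trans[OF Big_anc[OF b(1)] bt'] .
  have "t' \<notin> B t" using T_notU[OF t(2)] B_U[OF t(1)] by auto
  then have t't: "t' < t" using tt' lneqi[OF tt'] unfolding Big_def by auto
  have aty: "anc t y" using anc_trans[OF tt' Big_anc[OF xy(2)]] .
  have "y \<notin> B t" using top_unique[OF t(1,2) _ xy(2)] t(3) by auto
  then have "y < t" using aty lneqi[OF aty] unfolding Big_def by auto
  then show ?thesis using Big_lami[OF xy(1)] by simp
qed

lemma sameblk_U: "sameblk u v \<Longrightarrow> u \<in> U \<and> v \<in> U"
  unfolding sameblk_def using B_U by blast

lemma principle:
  assumes uv: "anc u v"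
  shows "sg u < sg v \<longleftrightarrow> (if sameblk u v then v < u else u < v)"
proof (cases "u \<in> U"; cases "v \<in> U")
  assume u: "u \<in> U" and v: "v \<in> U"
  obtain tu where tu: "tu \<in> T" "u \<in> B tu" using top_exists[OF u] by blast
  obtain tv where tv: "tv \<in> T" "v \<in> B tv" using top_exists[OF v] by blast
  show ?thesis
  proof (cases "tu = tv")
    case True
    then have "sameblk u v" unfolding sameblk_def using tu tv by auto
    then show ?thesis using sig_ord[OF tu(1) tu(2)] tv True by simp
  next
    case False
    have ns: "\<not> sameblk u v"
    proof
      assume "sameblk u v"
      then obtain t where "t \<in> T" "u \<in> B t" "v \<in> B t" unfolding sameblk_def by auto
      then show False using top_unique tu tv False by metis
    qed
    have "v < u" using blocks_order[OF tu(1) tv(1) False tu(2) tv(2) uv tu(2) tv(2)] .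
    moreover have "sg v < sg u" using blocks_order[OF tu(1) tv(1) False tu(2) tv(2) uv sig_B[OF tu] sig_B[OF tv]] .
    ultimately show ?thesis using ns by simp
  qed
next
  assume u: "u \<in> U" and v: "v \<notin> U"
  obtain t where t: "t \<in> T" "u \<in> B t" using top_exists[OF u] by blast
  have ns: "\<not> sameblk u v" using sameblk_U v by blast
  have "v \<notin> B t" using v B_U[OF t(1)] by auto
  then have e: "v < u \<longleftrightarrow> v < sg u" using uniform[OF t(1) t(2) sig_B[OF t] _ ] uv by blast
  have "u \<noteq> v" using uv anc_neq[OF F] by blast
  moreover have "sg u \<noteq> v" using sig_U u v by auto
  ultimately show ?thesis using e ns sig_out[OF v] by auto
next
  assume u: "u \<notin> U" and v: "v \<in> U"
  obtain t where t: "t \<in> T" "v \<in> B t" using top_exists[OF v] by blast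
  have ns: "\<not> sameblk u v" using sameblk_U u by blast
  have "u \<notin> B t" using u B_U[OF t(1)] by auto
  then have e: "u < v \<longleftrightarrow> u < sg v" using uniform[OF t(1) t(2) sig_B[OF t] _ ] uv by blast
  then show ?thesis using ns sig_out[OF u] by auto
next
  assume u: "u \<notin> U" and v: "v \<notin> U"
  then show ?thesis using sameblk_U sig_out by auto
qed

lemma principle2:
  assumes uv: "anc u v"
  shows "sg v < sg u \<longleftrightarrow> (if sameblk u v then u < v else v < u)"
proof -
  have "u \<noteq> v" using uv anc_neq[OF F] by blast
  moreover have "sg u \<noteq> sg v" using \<open>u \<noteq> v\<close> sig_inj by (meson injD)
  ultimately show ?thesis using principle[OF uv] by auto
qed

end

context S213 begin

lemma between_B: assumes "t \<in> T" "u \<in> B t" "anc u v" "anc v w" "w \<in> B t" shows "v \<in> B t"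
proof -
  have atv: "anc t v" using anc_trans[OF Big_anc[OF assms(2)] assms(3)] .
  have "t < v" using lBi[OF atv assms(4) Big_lami[OF assms(5)]] .
  then show ?thesis using atv unfolding Big_def by simp
qed

lemma below_block: assumes "t \<in> T" "v \<in> B t" "anc v w" "w \<notin> B t" shows "w < t"
proof -
  have atw: "anc t w" using anc_trans[OF Big_anc[OF assms(2)] assms(3)] .
  then show ?thesis using assms(4) lneqi[OF atw] unfolding Big_def by auto
qed

lemma sameblkE: "sameblk u v \<Longrightarrow> (\<And>t. t \<in> T \<Longrightarrow> u \<in> B t \<Longrightarrow> v \<in> B t \<Longrightarrow> P) \<Longrightarrow> P"
  unfolding sameblk_def by blast

lemma sameblkI: "t \<in> T \<Longrightarrow> u \<in> B t \<Longrightarrow> v \<in> B t \<Longrightarrow> sameblk u v"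
  unfolding sameblk_def by blast

lemma av213_sig:
  assumes M: "\<forall>x\<in>X. \<forall>y z. y \<in> B x \<longrightarrow> z \<in> B x \<longrightarrow> anc y z \<longrightarrow> (if d then z < y else y < z)"
  shows "av213 f sg"
  unfolding av213_def
proof (intro allI impI notI)
  fix u v w assume uv: "anc u v" and vw: "anc v w" and c: "sg v < sg u \<and> sg u < sg w"
  have uw: "anc u w" using anc_trans[OF uv vw] .
  have p1: "sg v < sg u \<longleftrightarrow> (if sameblk u v then u < v else v < u)" using principle2[OF uv] .
  have p2: "sg u < sg w \<longleftrightarrow> (if sameblk u w then w < u else u < w)" using principle[OF uw] .
  show False
  proof (cases "sameblk u w")
    case True
    then obtain t where t: "t \<in> T" "u \<in> B t" "w \<in> B t" by (rule sameblkE)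
    have vt: "v \<in> B t" using between_B[OF t(1,2) uv vw t(3)] .
    then have "sameblk u v" using t sameblkI by blast
    then have a: "u < v" "w < u" using p1 p2 c True by auto
    have tX: "t \<in> X" using t(1) T_sub_X by auto
    show False
    proof (cases d)
      case True then have "v < u" using M tX t(2) vt uv by auto
      then show False using a by simp
    next
      case False then have "u < w" using M tX t(2,3) uw by auto
      then show False using a by simp
    qed
  next
    case nuw: False
    then have uw': "u < w" using p2 c by simp
    show False
    proof (cases "sameblk u v")
      case True
      then obtain t where t: "t \<in> T" "u \<in> B t" "v \<in> B t" by (rule sameblkE)
      have "w \<notin> B t" using nuw t sameblkI by blast
      then have "w < t" using below_block[OF t(1,3) vw] by simp
      then show False using Big_lami[OF t(2)] uw' by simp
    next
      case nuv: False
      then have vu: "v < u" using p1 c by simp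
      show False
      proof (cases "sameblk v w")
        case True
        then obtain t where t: "t \<in> T" "v \<in> B t" "w \<in> B t" by (rule sameblkE)
        have "u \<notin> B t" using nuv t sameblkI by blast
        then have "u < v \<longleftrightarrow> u < w" using uniform[OF t(1,2,3)] uv by blast
        then show False using vu uw' by simp
      next
        case False
        then show False using A uv vw vu uw' unfolding av213_def by auto
      qed
    qed
  qed
qed

lemma iso_transfer:
  assumes ch: "\<And>i j. i < j \<Longrightarrow> j < L \<Longrightarrow> anc (g i) (g j)"
    and ns: "\<And>i j. i < j \<Longrightarrow> j < L \<Longrightarrow> \<not> sameblk (g i) (g j)"
    and ij: "i < L" "j < L"
  shows "sg (g i) < sg (g j) \<longleftrightarrow> g i < g j"
proof -
  consider "i < j" | "i = j" | "j < i" by arith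
  then show ?thesis
  proof cases
    case 1 then show ?thesis using principle[OF ch[OF 1 ij(2)]] ns[OF 1 ij(2)] by simp
  next
    case 2 then show ?thesis by simp
  next
    case 3 then show ?thesis using principle2[OF ch[OF 3 ij(1)]] ns[OF 3 ij(1)] by simp
  qed
qed

lemma notU_nosame:
  assumes "\<forall>i<L - 1. g i \<notin> U" "i < j" "j < L" shows "\<not> sameblk (g i) (g j)"
proof -
  have "i < L - 1" using assms(2,3) by arith
  then have "g i \<notin> U" using assms(1) by blast
  then show ?thesis using sameblk_U by blast
qed

lemma inst_id_sig:
  assumes nu: "\<forall>i<L - 1. g i \<notin> U"
  shows "inst n f id r g \<longleftrightarrow> inst n f sg r g"
proof -
  have ns: "\<not> sameblk (g i) (g j)" if "i < j" "j < L" for i j using notU_nosame[OF nu that] .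
  have key: "(\<forall>i<L. \<forall>j<L. sg (g i) < sg (g j) \<longleftrightarrow> g i < g j)"
    if ch: "\<forall>i j. i < j \<longrightarrow> j < L \<longrightarrow> anc (g i) (g j)"
  proof (intro allI impI)
    fix i j assume "i < L" "j < L"
    then show "sg (g i) < sg (g j) \<longleftrightarrow> g i < g j" using iso_transfer[of g i j] ch ns by blast
  qed
  show ?thesis
  proof
    assume a: "inst n f id r g"
    then have "\<forall>i j. i < j \<longrightarrow> j < L \<longrightarrow> anc (g i) (g j)" unfolding inst_def by blast
    then have k: "\<forall>i<L. \<forall>j<L. sg (g i) < sg (g j) \<longleftrightarrow> g i < g j" by (rule key)
    show "inst n f sg r g" using a k unfolding inst_def by simp
  next
    assume a: "inst n f sg r g"
    then have "\<forall>i j. i < j \<longrightarrow> j < L \<longrightarrow> anc (g i) (g j)" unfolding inst_def by blast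
    then have k: "\<forall>i<L. \<forall>j<L. sg (g i) < sg (g j) \<longleftrightarrow> g i < g j" by (rule key)
    show "inst n f id r g" using a k unfolding inst_def by simp
  qed
qed

end

locale S213M = S213 n f r for n f r +
  fixes d :: bool
  assumes M: "\<forall>x\<in>Xs n f id r. \<forall>y z. y \<in> Big f id x \<longrightarrow> z \<in> Big f id x \<longrightarrow> strict_anc f y z \<longrightarrow> (if d then z < y else y < z)"

sublocale S213M \<subseteq> Sg: L213 n f "sig n f r" r
proof
  show "inj_on (sig n f r) {1..n}" using sig_inj by (meson inj_on_subset subset_UNIV)
  show "av213 f (sig n f r)" using av213_sig M by blast
qed (use F R in auto)

context S213M begin

lemma X_sub: "X \<subseteq> Sg.X"
proof
  fix w assume "w \<in> X"
  then obtain g where g: "inst n f id r g" "g (L - 1) = w" "\<forall>i<L - 1. g i \<notin> U" using hstar by blast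
  have "inst n f sg r g" using inst_id_sig[OF g(3)] g(1) by simp
  then show "w \<in> Sg.X" using g(2) unfolding Xs_def by auto
qed

lemma B_eq: "t \<in> T \<Longrightarrow> Sg.B t = B t"
proof -
  assume t: "t \<in> T"
  have "sg t < sg v \<longleftrightarrow> t < v" if "anc t v" for v
    using principle[OF that] sameblk_U T_notU[OF t] by auto
  then show "Sg.B t = B t" unfolding Big_def by auto
qed

lemma U_sub: "U \<subseteq> Sg.U"
proof
  fix v assume "v \<in> U"
  then obtain t where t: "t \<in> T" "v \<in> B t" using top_exists by blast
  then show "v \<in> Sg.U" using B_eq[OF t(1)] X_sub T_sub_X unfolding Us_def by blast
qed

lemma X_eq: "Sg.X = X"
proof
  show "Sg.X \<subseteq> X"
  proof
    fix w assume "w \<in> Sg.X"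
    then obtain g where g: "inst n f sg r g" "g (L - 1) = w" "\<forall>i<L - 1. g i \<notin> Sg.U" using Sg.hstar by blast
    have "\<forall>i<L - 1. g i \<notin> U" using g(3) U_sub by blast
    then have "inst n f id r g" using inst_id_sig g(1) by simp
    then show "w \<in> X" using g(2) unfolding Xs_def by auto
  qed
qed (rule X_sub)

lemma SgB_in_block: assumes "t \<in> T" "y \<in> B t" "v \<in> Sg.B y" shows "v \<in> B t"
proof (rule ccontr)
  assume nv: "v \<notin> B t"
  have yv: "anc y v" "sg y < sg v" using assms(3) unfolding Big_def by auto
  have "\<not> sameblk y v"
  proof
    assume "sameblk y v"
    then obtain t' where "t' \<in> T" "y \<in> B t'" "v \<in> B t'" by (rule sameblkE)
    then show False using top_unique[OF assms(1) _ assms(2)] nv by metis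
  qed
  then have "y < v" using principle[OF yv(1)] yv(2) by simp
  moreover have "v < t" using below_block[OF assms(1,2) yv(1) nv] .
  moreover have "t < y" using Big_lami[OF assms(2)] .
  ultimately show False by simp
qed

lemma U_eq: "Sg.U = U"
proof
  show "Sg.U \<subseteq> U"
  proof
    fix v assume "v \<in> Sg.U"
    then obtain y where y: "y \<in> Sg.X" "v \<in> Sg.B y" unfolding Us_def by auto
    then have yX: "y \<in> X" using X_eq by simp
    show "v \<in> U"
    proof (cases "y \<in> U")
      case True
      then obtain t where t: "t \<in> T" "y \<in> B t" using top_exists by blast
      then show ?thesis using SgB_in_block[OF t y(2)] B_U by blast
    next
      case False
      then have "y \<in> T" using yX unfolding Tops_def by auto
      then show ?thesis using y(2) B_eq B_U by blast
    qed
  qed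
qed (rule U_sub)

lemma T_eq: "Sg.T = T"
  unfolding Tops_def using X_eq U_eq by simp

lemma mono_sig:
  assumes x: "x \<in> Sg.X" and yz: "y \<in> Sg.B x" "z \<in> Sg.B x" "anc y z"
  shows "if d then sg y < sg z else sg z < sg y"
proof -
  have xX: "x \<in> X" using x X_eq by simp
  obtain t where t: "t \<in> T" "y \<in> B t" "z \<in> B t"
  proof (cases "x \<in> U")
    case True
    then obtain t where t: "t \<in> T" "x \<in> B t" using top_exists by blast
    show ?thesis using that[OF t(1) SgB_in_block[OF t yz(1)] SgB_in_block[OF t yz(2)]] .
  next
    case False
    then have "x \<in> T" using xX unfolding Tops_def by auto
    then show ?thesis using that B_eq yz by auto
  qed
  have e: "sg y < sg z \<longleftrightarrow> z < y" using sig_ord[OF t] .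
  have tX: "t \<in> X" using t(1) T_sub_X by auto
  have yz': "y \<noteq> z" using yz(3) anc_neq[OF F] by blast
  have "sg y \<noteq> sg z" using yz' sig_inj by (meson injD)
  moreover have "if d then z < y else y < z" using M tX t(2,3) yz(3) by blast
  ultimately show ?thesis using e yz' by (cases d) auto
qed

end

lemma mk_inst_gen:
  assumes "\<And>i. i < length p \<Longrightarrow> g i \<in> {1..n}"
    "\<And>i j. i < j \<Longrightarrow> j < length p \<Longrightarrow> strict_anc f (g i) (g j)"
    "\<And>i j. i < j \<Longrightarrow> j < length p \<Longrightarrow> (p ! i < p ! j \<and> lam (g i) < lam (g j)) \<or> (p ! j < p ! i \<and> lam (g j) < lam (g i))"
  shows "inst n f lam p g"
  unfolding inst_def
proof (intro conjI allI impI)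
  fix i j assume ij: "i < length p" "j < length p"
  consider "i < j" | "i = j" | "j < i" by arith
  then show "lam (g i) < lam (g j) \<longleftrightarrow> p ! i < p ! j"
  proof cases
    case 1 then show ?thesis using assms(3)[OF 1 ij(2)] by auto
  next
    case 2 then show ?thesis by simp
  next
    case 3 then show ?thesis using assms(3)[OF 3 ij(1)] by auto
  qed
qed (use assms in auto)

context L213 begin

lemma cmpB:
  assumes g: "ins g" and i: "i < L - 1" and v: "v \<in> B (g (L - 1))"
  shows "lam (g i) < lam v \<longleftrightarrow> lam (g i) < lam (g (L - 1))"
    "lam v < lam (g i) \<longleftrightarrow> lam (g (L - 1)) < lam (g i)"
proof -
  let ?x = "g (L - 1)"
  have L0: "L \<ge> 1" using R by (cases r) auto
  have a: "anc (g i) ?x" using inst_anc[OF g, of i "L - 1"] i L0 by auto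
  have lv: "lam ?x < lam v" using Big_lam[OF v] .
  show "lam (g i) < lam v \<longleftrightarrow> lam (g i) < lam ?x"
  proof
    assume "lam (g i) < lam v"
    show "lam (g i) < lam ?x"
    proof (rule ccontr)
      assume "\<not> lam (g i) < lam ?x"
      then have "lam ?x < lam (g i)" using lneq[OF a] by auto
      then have "lam v < lam (g i)" using l213[OF a Big_anc[OF v]] by auto
      then show False using \<open>lam (g i) < lam v\<close> by simp
    qed
  qed (use lv in simp)
  show "lam v < lam (g i) \<longleftrightarrow> lam ?x < lam (g i)"
  proof
    assume "lam ?x < lam (g i)"
    then show "lam v < lam (g i)" using l213[OF a Big_anc[OF v]] by auto
  qed (use lv in simp)
qed

lemma contains_char:
  assumes p: "\<And>i. i < L - 1 \<Longrightarrow> (r ! i < r ! (L - 1) \<longleftrightarrow> r ! i < p1) \<and> (r ! i < r ! (L - 1) \<longleftrightarrow> r ! i < p2) \<and> r ! i \<noteq> p1 \<and> r ! i \<noteq> p2"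
    and p12: "r ! (L - 1) < p1" "r ! (L - 1) < p2" "p1 \<noteq> p2"
  shows "(\<exists>g. inst n f lam (r @ [p1, p2]) g) \<longleftrightarrow>
         (\<exists>x\<in>X. \<exists>y z. y \<in> B x \<and> z \<in> B x \<and> anc y z \<and> (lam y < lam z \<longleftrightarrow> p1 < p2))"
proof
  assume "\<exists>g. inst n f lam (r @ [p1, p2]) g"
  then obtain g where g: "inst n f lam (r @ [p1, p2]) g" by blast
  have L0: "L \<ge> 1" using R by (cases r) auto
  have len: "length (r @ [p1, p2]) = L + 2" by simp
  have nth1: "(r @ [p1, p2]) ! i = r ! i" if "i < L" for i using that by (simp add: nth_append)
  have nthL: "(r @ [p1, p2]) ! L = p1" "(r @ [p1, p2]) ! (L + 1) = p2" by (simp_all add: nth_append)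
  have gi: "lam (g i) < lam (g j) \<longleftrightarrow> (r @ [p1, p2]) ! i < (r @ [p1, p2]) ! j"
    if "i < L + 2" "j < L + 2" for i j using g that unfolding inst_def len by blast
  have ga: "anc (g i) (g j)" if "i < j" "j < L + 2" for i j using g that unfolding inst_def len by blast
  have gr: "ins g" unfolding inst_def
  proof (intro conjI allI impI)
    fix i assume "i < L" then show "g i \<in> {1..n}" using g unfolding inst_def by auto
  next
    fix i j assume "i < j" "j < L" then show "anc (g i) (g j)" using ga by simp
  next
    fix i j assume ij: "i < L" "j < L"
    then show "lam (g i) < lam (g j) \<longleftrightarrow> r ! i < r ! j" using gi[of i j] nth1[OF ij(1)] nth1[OF ij(2)] by simp
  qed
  have xX: "g (L - 1) \<in> X" using gr unfolding Xs_def by auto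
  have a1: "anc (g (L - 1)) (g L)" "anc (g L) (g (L + 1))" "anc (g (L - 1)) (g (L + 1))"
    using ga L0 by auto
  have lm: "L - 1 < L" "L - 1 < L + 2" using L0 by auto
  have c1: "lam (g (L - 1)) < lam (g L) \<longleftrightarrow> r ! (L - 1) < p1"
    using gi[of "L - 1" L] nth1[OF lm(1)] nthL(1) lm by simp
  have c2: "lam (g (L - 1)) < lam (g (L + 1)) \<longleftrightarrow> r ! (L - 1) < p2"
    using gi[of "L - 1" "L + 1"] nth1[OF lm(1)] nthL(2) lm by simp
  have c3: "lam (g L) < lam (g (L + 1)) \<longleftrightarrow> p1 < p2"
    using gi[of L "L + 1"] nthL by simp
  have "g L \<in> B (g (L - 1))" "g (L + 1) \<in> B (g (L - 1))" using a1 c1 c2 p12 unfolding Big_def by auto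
  then show "\<exists>x\<in>X. \<exists>y z. y \<in> B x \<and> z \<in> B x \<and> anc y z \<and> (lam y < lam z \<longleftrightarrow> p1 < p2)"
    using xX a1 c3 by blast
next
  assume "\<exists>x\<in>X. \<exists>y z. y \<in> B x \<and> z \<in> B x \<and> anc y z \<and> (lam y < lam z \<longleftrightarrow> p1 < p2)"
  then obtain x y z where x: "x \<in> X" and yz: "y \<in> B x" "z \<in> B x" "anc y z" "lam y < lam z \<longleftrightarrow> p1 < p2" by blast
  obtain h where h: "ins h" "h (L - 1) = x" using x by (rule XsE)
  have L0: "L \<ge> 1" using R by (cases r) auto
  define g where "g = (\<lambda>i. if i < L then h i else if i = L then y else z)"
  have len: "length (r @ [p1, p2]) = L + 2" by simp
  have nth1: "(r @ [p1, p2]) ! i = r ! i" if "i < L" for i using that by (simp add: nth_append)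
  have nthL: "(r @ [p1, p2]) ! L = p1" "(r @ [p1, p2]) ! (Suc L) = p2" by (simp_all add: nth_append)
  have yzin: "y \<in> {1..n}" "z \<in> {1..n}" using yz anc_in[OF F] Big_anc by blast+
  have mixed: "anc (h i) v \<and> ((r ! i < p \<and> lam (h i) < lam v) \<or> (p < r ! i \<and> lam v < lam (h i)))"
    if i: "i < L" and v: "v \<in> B x" and pp: "r ! (L - 1) < p"
      "\<And>i. i < L - 1 \<Longrightarrow> (r ! i < r ! (L - 1) \<longleftrightarrow> r ! i < p) \<and> r ! i \<noteq> p" for i v p
  proof (cases "i = L - 1")
    case True
    then show ?thesis using h Big_anc[OF v] Big_lam[OF v] pp by auto
  next
    case False
    then have i': "i < L - 1" using i by auto
    have "anc (h i) (h (L - 1))" using inst_anc[OF h(1), of i "L - 1"] i' L0 by auto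
    then have an: "anc (h i) v" using anc_trans Big_anc[OF v] h(2) by blast
    have ix: "lam (h i) < lam x \<longleftrightarrow> r ! i < r ! (L - 1)" using iso[OF h(1), of i "L - 1"] h i' L0 by auto
    have ne: "lam (h i) \<noteq> lam x" using lneq inst_anc[OF h(1), of i "L - 1"] h i' L0 by auto
    have v': "v \<in> B (h (L - 1))" using v h by simp
    show ?thesis
    proof (cases "lam (h i) < lam x")
      case True
      then show ?thesis using an cmpB(1)[OF h(1) i' v'] h ix pp(2)[OF i'] by auto
    next
      case False
      then have "lam x < lam (h i)" using ne by auto
      moreover have "p < r ! i" using False ix pp(2)[OF i'] by (metis nat_neq_iff)
      ultimately show ?thesis using an cmpB(2)[OF h(1) i' v'] h by auto
    qed
  qed
  have "inst n f lam (r @ [p1, p2]) g"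
  proof (rule mk_inst_gen)
    fix i assume "i < length (r @ [p1, p2])"
    then show "g i \<in> {1..n}" using inst_in[OF h(1)] yzin unfolding g_def by auto
  next
    fix i j assume ij: "i < j" "j < length (r @ [p1, p2])"
    show "anc (g i) (g j)"
    proof (cases "j < L")
      case True then show ?thesis using inst_anc[OF h(1) ij(1)] ij unfolding g_def by auto
    next
      case False
      show ?thesis
      proof (cases "i < L")
        case True
        have "anc (h i) y" "anc (h i) z" using mixed[OF True yz(1) p12(1)] mixed[OF True yz(2) p12(2)] p by auto
        then show ?thesis using True False ij unfolding g_def by auto
      next
        case False2: False
        then have "i = L" "j = Suc L" using ij False by auto
        then show ?thesis using yz(3) unfolding g_def by auto
      qed
    qed
  next
    fix i j assume ij: "i < j" "j < length (r @ [p1, p2])"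
    show "((r @ [p1, p2]) ! i < (r @ [p1, p2]) ! j \<and> lam (g i) < lam (g j)) \<or>
          ((r @ [p1, p2]) ! j < (r @ [p1, p2]) ! i \<and> lam (g j) < lam (g i))"
    proof (cases "j < L")
      case True then show ?thesis using inst_pair[OF h(1) ij(1) True] ij nth1 unfolding g_def by auto
    next
      case False
      show ?thesis
      proof (cases "i < L")
        case True
        have jj: "j = L \<or> j = Suc L" using ij False by auto
        have m1: "(r ! i < p1 \<and> lam (h i) < lam y) \<or> (p1 < r ! i \<and> lam y < lam (h i))"
          using mixed[OF True yz(1) p12(1)] p by auto
        have m2: "(r ! i < p2 \<and> lam (h i) < lam z) \<or> (p2 < r ! i \<and> lam z < lam (h i))"
          using mixed[OF True yz(2) p12(2)] p by auto
        show ?thesis using jj m1 m2 True nth1[OF True] nthL unfolding g_def by auto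
      next
        case False2: False
        then have ij': "i = L" "j = Suc L" using ij False by auto
        have "lam y \<noteq> lam z" using lneq[OF yz(3)] .
        then show ?thesis using ij' nthL yz(4) p12(3) unfolding g_def by (auto simp: nat_neq_iff)
      qed
    qed
  qed
  then show "\<exists>g. inst n f lam (r @ [p1, p2]) g" by blast
qed

end

definition Phi :: "nat \<Rightarrow> nat list \<Rightarrow> (nat \<Rightarrow> nat) \<Rightarrow> nat \<Rightarrow> nat" where
  "Phi n r f = sig n f r \<circ> f \<circ> sig n f r"

context S213 begin

abbreviation "phi \<equiv> Phi n r f"

lemma phi_app: "phi v = sg (f (sg v))" unfolding Phi_def by simp

lemma phi_pow: "(phi ^^ j) v = sg ((f ^^ j) (sg v))"
proof (induction j)
  case 0 then show ?case using sig_inv by simp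
next
  case (Suc j) then show ?case using sig_inv by (simp add: phi_app)
qed

lemma sg_eq: "sg a = b \<longleftrightarrow> a = sg b"
  using sig_inv by metis

lemma anc_phi: "strict_anc phi u v \<longleftrightarrow> anc (sg u) (sg v)"
proof -
  have z: "u \<noteq> 0 \<longleftrightarrow> sg u \<noteq> 0" using sig_0 sg_eq by metis
  show ?thesis unfolding strict_anc_def phi_pow sg_eq using z sig_0 by auto
qed

lemma forest_phi: "forest n phi"
  unfolding forest_def
proof (intro conjI allI impI ballI)
  fix v assume "v \<notin> {1..n}"
  then have "sg v \<notin> {1..n}" using sig_rng by blast
  then have "f (sg v) = 0" using F unfolding forest_def by blast
  then show "phi v = 0" using sig_0 phi_app by simp
next
  fix v assume v: "v \<in> {1..n}"
  then have sv: "sg v \<in> {1..n}" using sig_rng by blast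
  then have "f (sg v) \<le> n" using F unfolding forest_def by blast
  then show "phi v \<le> n"
  proof (cases "f (sg v) = 0")
    case True then show ?thesis using sig_0 phi_app by simp
  next
    case False
    then have "f (sg v) \<in> {1..n}" using \<open>f (sg v) \<le> n\<close> by auto
    then have "sg (f (sg v)) \<in> {1..n}" using sig_rng by blast
    then show ?thesis using phi_app by simp
  qed
next
  fix v assume v: "v \<in> {1..n}"
  then have sv: "sg v \<in> {1..n}" using sig_rng by blast
  have "\<forall>v\<in>{1..n}. \<exists>j. (f ^^ j) v = 0" using F unfolding forest_def by (elim conjE)
  then obtain j where "(f ^^ j) (sg v) = 0" using sv by blast
  then have "(phi ^^ j) v = 0" using phi_pow sig_0 by simp
  then show "\<exists>j. (phi ^^ j) v = 0" by blast
qed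

lemma inst_phi: "inst n phi lam p g \<longleftrightarrow> inst n f (lam \<circ> sg) p (sg \<circ> g)"
  unfolding inst_def anc_phi using sig_rng sig_inv by simp

lemma contains_phi: "contains n phi p \<longleftrightarrow> (\<exists>g. inst n f sg p g)"
proof -
  have "contains n phi p \<longleftrightarrow> (\<exists>g. inst n f sg p (sg \<circ> g))"
    unfolding contains_inst inst_phi by simp
  also have "\<dots> \<longleftrightarrow> (\<exists>g. inst n f sg p g)"
  proof
    assume "\<exists>g. inst n f sg p g"
    then obtain g where g: "inst n f sg p g" by blast
    have "sg \<circ> (sg \<circ> g) = g" using sig_inv by (simp add: comp_def)
    then show "\<exists>g. inst n f sg p (sg \<circ> g)" using g by metis
  qed blast
  finally show ?thesis .
qed

lemma av213_phi: "av213 phi id \<longleftrightarrow> av213 f sg"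
  unfolding av213_def anc_phi
proof
  assume a: "\<forall>u v w. anc (sg u) (sg v) \<longrightarrow> anc (sg v) (sg w) \<longrightarrow> \<not> (id v < id u \<and> id u < id w)"
  show "\<forall>u v w. anc u v \<longrightarrow> anc v w \<longrightarrow> \<not> (sg v < sg u \<and> sg u < sg w)"
  proof (intro allI impI)
    fix u v w assume "anc u v" "anc v w"
    then show "\<not> (sg v < sg u \<and> sg u < sg w)" using a[rule_format, of "sg u" "sg v" "sg w"] sig_inv by simp
  qed
next
  assume a: "\<forall>u v w. anc u v \<longrightarrow> anc v w \<longrightarrow> \<not> (sg v < sg u \<and> sg u < sg w)"
  show "\<forall>u v w. anc (sg u) (sg v) \<longrightarrow> anc (sg v) (sg w) \<longrightarrow> \<not> (id v < id u \<and> id u < id w)"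
  proof (intro allI impI)
    fix u v w assume "anc (sg u) (sg v)" "anc (sg v) (sg w)"
    then show "\<not> (id v < id u \<and> id u < id w)" using a[rule_format, of "sg u" "sg v" "sg w"] sig_inv by simp
  qed
qed

lemma Xs_phi: "x \<in> Xs n phi id r \<longleftrightarrow> sg x \<in> Xs n f sg r"
proof
  assume "x \<in> Xs n phi id r"
  then obtain g where "inst n phi id r g" "g (L - 1) = x" unfolding Xs_def by auto
  then show "sg x \<in> Xs n f sg r" unfolding Xs_def inst_phi by (intro CollectI exI[of _ "sg \<circ> g"]) auto
next
  assume "sg x \<in> Xs n f sg r"
  then obtain g where g: "inst n f sg r g" "g (L - 1) = sg x" unfolding Xs_def by auto
  have "sg \<circ> (sg \<circ> g) = g" using sig_inv by (simp add: comp_def)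
  then have "inst n phi id r (sg \<circ> g)" unfolding inst_phi using g by simp
  moreover have "(sg \<circ> g) (L - 1) = x" using g sig_inv by simp
  ultimately show "x \<in> Xs n phi id r" unfolding Xs_def by blast
qed

lemma Big_phi: "v \<in> Big phi id x \<longleftrightarrow> sg v \<in> Big f sg (sg x)"
  unfolding Big_def anc_phi using sig_inv by simp

end

context S213M begin

lemma Us_phi: "Us n phi id r = U"
proof -
  have "v \<in> Us n phi id r \<longleftrightarrow> sg v \<in> Sg.U" for v
  proof
    assume "v \<in> Us n phi id r"
    then obtain y where "y \<in> Xs n phi id r" "v \<in> Big phi id y" unfolding Us_def by auto
    then show "sg v \<in> Sg.U" unfolding Us_def Xs_phi Big_phi by auto
  next
    assume "sg v \<in> Sg.U"
    then obtain y where y: "y \<in> Sg.X" "sg v \<in> Sg.B y" unfolding Us_def by auto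
    then have "sg y \<in> Xs n phi id r" "v \<in> Big phi id (sg y)" unfolding Xs_phi Big_phi using sig_inv by auto
    then show "v \<in> Us n phi id r" unfolding Us_def by auto
  qed
  then show ?thesis using U_eq sig_U by auto
qed

lemma Xs_phi_eq: "Xs n phi id r = X"
proof -
  have "sg x \<in> X \<longleftrightarrow> x \<in> X" for x
  proof (cases "x \<in> U")
    case True then show ?thesis using sig_U U_sub_X by auto
  next
    case False then show ?thesis using sig_out by simp
  qed
  then show ?thesis using Xs_phi X_eq by auto
qed

lemma Tops_phi: "Tops n phi id r = T"
  unfolding Tops_def using Us_phi Xs_phi_eq by simp

lemma Big_phi_T: "t \<in> T \<Longrightarrow> Big phi id t = B t"
proof -
  assume t: "t \<in> T"
  have st: "sg t = t" using sig_out T_notU[OF t] by simp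
  have "v \<in> Big phi id t \<longleftrightarrow> v \<in> B t" for v
  proof -
    have "v \<in> Big phi id t \<longleftrightarrow> sg v \<in> B t" using Big_phi st B_eq[OF t] by simp
    also have "\<dots> \<longleftrightarrow> v \<in> B t" using sig_B[OF t] sig_inv by metis
    finally show ?thesis .
  qed
  then show ?thesis by auto
qed

lemma sig_phi: "sig n phi r = sg"
proof
  fix v
  have pred: "(t \<in> Tops n phi id r \<and> v \<in> Big phi id t) \<longleftrightarrow> (t \<in> T \<and> v \<in> B t)" for t
    using Tops_phi Big_phi_T by auto
  show "sig n phi r v = sg v"
  proof (cases "v \<in> U")
    case True
    then obtain t where t: "t \<in> T" "v \<in> B t" using top_exists by blast
    have th: "(THE t. t \<in> T \<and> v \<in> B t) = t" by (rule the1_equality) (use t top_unique in auto)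
    have "sig n phi r v = rv (Big phi id (THE t. t \<in> T \<and> v \<in> B t)) v"
      unfolding sig_def using Us_phi True pred by simp
    also have "\<dots> = rv (B t) v" using th Big_phi_T[OF t(1)] by simp
    also have "\<dots> = sg v" using sig_block[OF t] by simp
    finally show ?thesis .
  next
    case False then show ?thesis unfolding sig_def using Us_phi by simp
  qed
qed

lemma Phi_Phi: "Phi n r phi = f"
proof
  fix v
  have "Phi n r phi = sg \<circ> phi \<circ> sg" by (simp only: Phi_def[of n r "Phi n r f"] sig_phi)
  then show "Phi n r phi v = f v" using sig_inv phi_app by simp
qed

end

definition cond :: "nat list \<Rightarrow> nat \<Rightarrow> nat \<Rightarrow> bool" where
  "cond r p1 p2 \<longleftrightarrow> (\<forall>i<length r - 1. (r ! i < r ! (length r - 1) \<longleftrightarrow> r ! i < p1) \<and>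
       (r ! i < r ! (length r - 1) \<longleftrightarrow> r ! i < p2) \<and> r ! i \<noteq> p1 \<and> r ! i \<noteq> p2) \<and>
     r ! (length r - 1) < p1 \<and> r ! (length r - 1) < p2 \<and> p1 \<noteq> p2"

lemma cond_sym: "cond r p1 p2 \<Longrightarrow> cond r p2 p1"
  unfolding cond_def by auto

lemma swap_step:
  assumes F: "forest n f" and A: "av213 f id" and R: "r \<noteq> []" and C: "cond r p1 p2"
    and N: "\<not> contains n f (r @ [p1, p2])"
  shows "forest n (Phi n r f) \<and> av213 (Phi n r f) id \<and> \<not> contains n (Phi n r f) (r @ [p2, p1])
         \<and> Phi n r (Phi n r f) = f"
proof -
  interpret S: S213 n f r
    by unfold_locales (use F A R in auto)
  have c1: "\<And>i. i < length r - 1 \<Longrightarrow> (r ! i < r ! (length r - 1) \<longleftrightarrow> r ! i < p1) \<and>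
       (r ! i < r ! (length r - 1) \<longleftrightarrow> r ! i < p2) \<and> r ! i \<noteq> p1 \<and> r ! i \<noteq> p2"
    and c2: "r ! (length r - 1) < p1" "r ! (length r - 1) < p2" "p1 \<noteq> p2"
    using C unfolding cond_def by auto
  have nc: "\<not> (\<exists>x\<in>S.X. \<exists>y z. y \<in> S.B x \<and> z \<in> S.B x \<and> S.anc y z \<and> (id y < id z \<longleftrightarrow> p1 < p2))"
    using S.contains_char[OF c1 c2] N unfolding contains_inst by blast
  have M: "\<forall>x\<in>S.X. \<forall>y z. y \<in> S.B x \<longrightarrow> z \<in> S.B x \<longrightarrow> S.anc y z \<longrightarrow> (if p1 < p2 then z < y else y < z)"
  proof (intro ballI allI impI)
    fix x y z assume x: "x \<in> S.X" and yz: "y \<in> S.B x" "z \<in> S.B x" "S.anc y z"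
    have "\<not> (y < z \<longleftrightarrow> p1 < p2)" using nc x yz by auto
    moreover have "y \<noteq> z" using yz(3) anc_neq[OF F] by blast
    ultimately show "if p1 < p2 then z < y else y < z" by auto
  qed
  interpret SM: S213M n f r "p1 < p2"
    by unfold_locales (use M in auto)
  have c1': "\<And>i. i < length r - 1 \<Longrightarrow> (r ! i < r ! (length r - 1) \<longleftrightarrow> r ! i < p2) \<and>
       (r ! i < r ! (length r - 1) \<longleftrightarrow> r ! i < p1) \<and> r ! i \<noteq> p2 \<and> r ! i \<noteq> p1"
    using c1 by blast
  have cc: "contains n (Phi n r f) (r @ [p2, p1]) \<longleftrightarrow>
    (\<exists>x\<in>SM.Sg.X. \<exists>y z. y \<in> SM.Sg.B x \<and> z \<in> SM.Sg.B x \<and> S.anc y z \<and> (S.sg y < S.sg z \<longleftrightarrow> p2 < p1))"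
    using S.contains_phi SM.Sg.contains_char[OF c1' c2(2,1)] c2(3) by auto
  have "\<not> contains n (Phi n r f) (r @ [p2, p1])"
  proof
    assume "contains n (Phi n r f) (r @ [p2, p1])"
    then obtain x y z where x: "x \<in> SM.Sg.X" and yz: "y \<in> SM.Sg.B x" "z \<in> SM.Sg.B x" "S.anc y z"
      and e: "S.sg y < S.sg z \<longleftrightarrow> p2 < p1" using cc by blast
    have m: "if p1 < p2 then S.sg y < S.sg z else S.sg z < S.sg y" using SM.mono_sig[OF x yz] .
    show False
    proof (cases "p1 < p2")
      case True then show False using m e by auto
    next
      case False then show False using m e c2(3) by auto
    qed
  qed
  moreover have "forest n (Phi n r f)" using S.forest_phi .
  moreover have "av213 (Phi n r f) id" using S.av213_phi SM.Sg.A by simp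
  moreover have "Phi n r (Phi n r f) = f" using SM.Phi_Phi .
  ultimately show ?thesis by blast
qed

lemma avoids2: "avoids n f {[2,1,3], p} \<longleftrightarrow> \<not> contains n f [2,1,3] \<and> \<not> contains n f p"
  unfolding avoids_def by auto

theorem theorem1p3:
  fixes \<pi> :: "nat list" and k :: nat
  assumes "k \<ge> 3" and "length \<pi> = k" and "is_perm \<pi>"
    and "\<pi> ! (k - 1) = \<pi> ! (k - 2) + 1" and "\<pi> ! (k - 2) = \<pi> ! (k - 3) + 1"
  shows "\<forall>n. num_avoiders n {[2,1,3], \<pi>}
           = num_avoiders n {[2,1,3], take (k - 2) \<pi> @ [\<pi> ! (k - 1), \<pi> ! (k - 2)]}"
proof
  fix n
  define r where "r = take (k - 2) \<pi>"
  define p1 where "p1 = \<pi> ! (k - 2)"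
  define p2 where "p2 = \<pi> ! (k - 1)"
  define a where "a = \<pi> ! (k - 3)"
  have lr: "length r = k - 2" unfolding r_def using assms(1,2) by simp
  have R: "r \<noteq> []" using lr assms(1) by auto
  have rn: "r ! i = \<pi> ! i" if "i < k - 2" for i unfolding r_def using that by simp
  have pa: "p1 = a + 1" "p2 = a + 2" unfolding p1_def p2_def a_def using assms(4,5) by simp_all
  have pi_eq: "\<pi> = r @ [p1, p2]"
  proof (rule nth_equalityI)
    show "length \<pi> = length (r @ [p1, p2])" using lr assms(1,2) by simp
  next
    fix i assume i: "i < length \<pi>"
    consider "i < k - 2" | "i = k - 2" | "i = k - 1" using i assms(1,2) by arith
    then show "\<pi> ! i = (r @ [p1, p2]) ! i"
    proof cases
      case 1 then show ?thesis using rn lr by (simp add: nth_append)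
    next
      case 2 then show ?thesis using lr unfolding p1_def by (simp add: nth_append)
    next
      case 3
      then have "i - length r = 1" using lr assms(1) by simp
      moreover have "\<not> i < length r" using 3 lr by simp
      ultimately show ?thesis using 3 unfolding p2_def by (simp add: nth_append)
    qed
  qed
  have dist: "distinct \<pi>" using assms(3) unfolding is_perm_def by simp
  have C: "cond r p1 p2" unfolding cond_def
  proof (intro conjI allI impI)
    have l1: "length r - 1 = k - 3" using lr by simp
    have ra: "r ! (length r - 1) = a" unfolding l1 a_def using rn[of "k - 3"] assms(1) by simp
    fix i assume "i < length r - 1"
    then have i: "i < k - 3" using l1 by simp
    have ri: "r ! i = \<pi> ! i" using rn i by simp
    have "\<pi> ! i \<noteq> \<pi> ! (k - 3)" "\<pi> ! i \<noteq> \<pi> ! (k - 2)" "\<pi> ! i \<noteq> \<pi> ! (k - 1)"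
      using nth_eq_iff_index_eq[OF dist] i assms(1,2) by auto
    then have ne: "r ! i \<noteq> a" "r ! i \<noteq> a + 1" "r ! i \<noteq> a + 2"
      using ri pa unfolding p1_def p2_def a_def by auto
    show "r ! i < r ! (length r - 1) \<longleftrightarrow> r ! i < p1" using ra pa ne by auto
    show "r ! i < r ! (length r - 1) \<longleftrightarrow> r ! i < p2" using ra pa ne by auto
    show "r ! i \<noteq> p1" "r ! i \<noteq> p2" using pa ne by auto
  next
    have l1: "length r - 1 = k - 3" using lr by simp
    have ra: "r ! (length r - 1) = a" unfolding l1 a_def using rn[of "k - 3"] assms(1) by simp
    show "r ! (length r - 1) < p1" "r ! (length r - 1) < p2" "p1 \<noteq> p2" using ra pa by auto
  qed
  have pt: "take (k - 2) \<pi> @ [\<pi> ! (k - 1), \<pi> ! (k - 2)] = r @ [p2, p1]"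
    unfolding r_def p1_def p2_def by simp
  define SA where "SA = {f. forest n f \<and> avoids n f {[2,1,3], \<pi>}}"
  define SB where "SB = {f. forest n f \<and> avoids n f {[2,1,3], r @ [p2, p1]}}"
  have memA: "f \<in> SA \<longleftrightarrow> forest n f \<and> av213 f id \<and> \<not> contains n f (r @ [p1, p2])" for f
    unfolding SA_def avoids2 using contains213 pi_eq by auto
  have memB: "f \<in> SB \<longleftrightarrow> forest n f \<and> av213 f id \<and> \<not> contains n f (r @ [p2, p1])" for f
    unfolding SB_def avoids2 using contains213 by auto
  have AB: "Phi n r f \<in> SB \<and> Phi n r (Phi n r f) = f" if "f \<in> SA" for f
    using swap_step[of n f r p1 p2] that R C unfolding memA memB by blast
  have BA: "Phi n r f \<in> SA \<and> Phi n r (Phi n r f) = f" if "f \<in> SB" for f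
    using swap_step[of n f r p2 p1] that R cond_sym[OF C] unfolding memA memB by blast
  have "bij_betw (Phi n r) SA SB"
    by (rule bij_betw_byWitness[where f' = "Phi n r"]) (use AB BA in auto)
  then have "card SA = card SB" by (rule bij_betw_same_card)
  then show "num_avoiders n {[2,1,3], \<pi>}
           = num_avoiders n {[2,1,3], take (k - 2) \<pi> @ [\<pi> ! (k - 1), \<pi> ! (k - 2)]}"
    unfolding num_avoiders_def pt SA_def SB_def by simp
qed

end
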